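(* Assume (A) and (N) hold with $\omega_A<0$, and let $G:H_0\to H$ be globally Lipschitz and of class $C^1$. Then for every $t>0$ and $\omega$, the map $\xi\mapsto\tilde\phi^t_\omega(\xi)$ is Fréchet differentiable at every $\xi\in H_0$, and for any $\beta\in(1-1/p^*,1)$ the derivative at $\xi$ in the direction $\eta\in H_0$ satisfies $$D_\xi\tilde\phi^t_\omega[\eta]=T_0(t)\eta+\int_0^t(-A_0)^\beta T_0(t-s)(-A)^{-\beta}DG_{\tilde\phi^s_\omega(\xi)}\big(D_\xi\tilde\phi^s_\omega[\eta]\big)\,\mathrm{d}s.$$
   Context: Let $H$ be a separable Hilbert space and $A:D(A)\subset H\to H$ a linear operator with $H_0:=\overline{D(A)}\neq H$. The part of $A$ in $H_0$ is $A_0y:=Ay$ on $D(A_0):=\{y\in D(A):Ay\in H_0\}$. Assumption (A): (a) $A_0$ is sectorial on $H_0$, i.e. there are $\bar\omega\in\mathbb{R}$, $\vartheta\in(\pi/2,\pi)$, $\bar M>0$ with $\rho(A_0)\supset S_\vartheta:=\{z\in\mathbb{C}\setminus\{\bar\omega\}:|\arg(z-\bar\omega)|\le\vartheta\}$ and $\|(\lambda-A_0)^{-1}\|\le\bar M/|\lambda-\bar\omega|$ for $\lambda\in S_\vartheta$; (b) there exist $\omega_A\in\mathbb{R}$ and $p^*\in[1,\infty)$ with $(\omega_A,\infty)\subset\rho(A)$ and $\limsup_{\lambda\to+\infty}\lambda^{1/p^*}\|(\lambda I-A)^{-1}\|_{\mathcal{L}(H)}<\infty$. Under (A), $A_0$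 generates an analytic $C_0$-semigroup $(T_0(t))_{t\ge0}$ on $H_0$ and $A$ generates the integrated semigroup $S_A(t)=(\nu I-A_0)\int_0^tT_0(s)\,\mathrm{d}s\,(\nu I-A)^{-1}$; for $t>0$, $S_A'(t)x=(-A_0)^\beta T_0(t)(-A)^{-\beta}x$ ($x\in H$, $\beta\in(1-1/p^*,1)$), with $\|(-A)^{-\beta}\|<\infty$ and $\|(-A_0)^\beta T_0(t)\|\le M_\beta t^{-\beta}e^{\omega_At}$. Assumption (N): $(\Omega,\mathcal{F},\mathbb{P},(\theta_t)_{t\in\mathbb{R}})$ is an ergodic metric dynamical system and $W$ is a two-sided $Q$-Wiener process on $H$ ($Q$ trace class) with $W_t(\theta_s\omega)=W_{t+s}(\omega)-W_s(\omega)$. For $\omega_A<0$, $Y_\omega(t):=\int_{-\infty}^tS_A'(t-\tau)\,\mathrm{d}W(\tau)$ ($H_0$-valued, continuous, $Y_{\theta_t\omega}(s)=Y_\omega(t+s)$). The cocycle $\tilde\phi$: for $\xi\in H_0$, $t\ge0$, $\tilde\phi^t_\omega(\xi):=V(t)+Y_\omega(t)$, where $V\in C([0,\infty),H_0)$ is the unique solution of $V(t)=T_0(t)(\xi-Y_\omega(0))+\int_0^t(-A_0)^\beta T_0(t-s)(-A)^{-\beta}G(V(s)+Y_\omega(s))\,\mathrm{d}s$; it is the mild solution of $\mathrm{d}X=AX\,\mathrm{d}t+G(X)\,\mathrm{d}t+\mathrm{d}W$, $X(0)=\xi$. *)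

theory Defs
  imports "HOL-Analysis.Analysis"
begin

text \<open>Mild formulation: \<open>V\<close> solves, on \<open>[0,\<infinity>)\<close>,
  V(t) = T0(t)(xi - Y(0)) + int_0^t S'(t-s) G(V(s)+Y(s)) ds,
  where \<open>K t = S_A'(t) = (-A0)^beta T0(t) (-A)^(-beta)\<close> (Bochner integral).\<close>

definition mild_sol ::
  "(real \<Rightarrow> 'a::{real_inner,banach,second_countable_topology} \<Rightarrow>\<^sub>L 'a) \<Rightarrow>
   (real \<Rightarrow> 'a \<Rightarrow>\<^sub>L 'a) \<Rightarrow> ('a \<Rightarrow> 'a) \<Rightarrow> 'a set \<Rightarrow> (real \<Rightarrow> 'a) \<Rightarrow> 'a \<Rightarrow>
   (real \<Rightarrow> 'a) \<Rightarrow> bool" where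
  "mild_sol T0 K G H0 Y \<xi> V \<longleftrightarrow>
     continuous_on {0..} V \<and> V ` {0..} \<subseteq> H0 \<and>
     (\<forall>t\<ge>0. V t = T0 t (\<xi> - Y 0) +
                 (LINT s:{0..t}|lborel. K (t - s) (G (V s + Y s))))"

definition cocycle ::
  "(real \<Rightarrow> 'a::{real_inner,banach,second_countable_topology} \<Rightarrow>\<^sub>L 'a) \<Rightarrow>
   (real \<Rightarrow> 'a \<Rightarrow>\<^sub>L 'a) \<Rightarrow> ('a \<Rightarrow> 'a) \<Rightarrow> 'a set \<Rightarrow> (real \<Rightarrow> 'a) \<Rightarrow> real \<Rightarrow> 'a \<Rightarrow> 'a" where
  "cocycle T0 K G H0 Y t \<xi> =
     (THE x. \<exists>V. mild_sol T0 K G H0 Y \<xi> V \<and> x = V t) + Y t"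

end

theory Submission
  imports Defs
begin

lemma kern_has_integral:
  fixes a t :: real
  assumes a0: "0 \<le> a" and a1: "a < 1" and t0: "0 \<le> t"
  shows "((\<lambda>s. (t - s) powr (-a)) has_integral (t powr (1-a) / (1-a))) {0..t}"
proof -
  define F where "F s = - ((t - s) powr (1-a) / (1-a))" for s
  have "((\<lambda>s. (t - s) powr (-a)) has_integral (F t - F 0)) {0..t}"
  proof (rule fundamental_theorem_of_calculus_interior)
    show "continuous_on {0..t} F" unfolding F_def
      using a1 by (intro continuous_intros continuous_on_powr') auto
    fix x assume x: "x \<in> {0<..<t}"
    have "((\<lambda>s. (t - s) powr (1-a)) has_real_derivative ((1-a) * (t - x) powr (1 - a - 1) * (-1))) (at x)"
      using x by (auto intro!: derivative_eq_intros)
    then have h: "((\<lambda>s. (t - s) powr (1-a)) has_real_derivative (-((1-a) * (t - x) powr (-a)))) (at x)"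
      by simp
    have "(F has_real_derivative (- (-((1-a) * (t - x) powr (-a)) / (1-a)))) (at x)"
      unfolding F_def by (intro DERIV_minus DERIV_cdivide h)
    then have "(F has_real_derivative (t - x) powr (-a)) (at x)"
      using a1 by simp
    then show "(F has_vector_derivative (t - x) powr (-a)) (at x)"
      by (simp add: has_real_derivative_iff_has_vector_derivative)
  qed (use t0 in auto)
  moreover have "F t - F 0 = t powr (1-a) / (1-a)" unfolding F_def using a1 by simp
  ultimately show ?thesis by simp
qed

lemma kern_integrable:
  fixes a t :: real
  assumes a0: "0 \<le> a" and a1: "a < 1" and t0: "0 \<le> t"
  shows "set_integrable lborel {0..t} (\<lambda>s. (t - s) powr (-a))"
    and "(LINT s:{0..t}|lborel. (t - s) powr (-a)) = t powr (1-a) / (1-a)"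
proof -
  let ?f = "\<lambda>s. indicator {0..t} s * (t - s) powr (-a)"
  have hi: "(?f has_integral (t powr (1-a) / (1-a))) UNIV"
  proof -
    have "((\<lambda>s. if s \<in> {0..t} then (t - s) powr (-a) else 0) has_integral (t powr (1-a) / (1-a))) UNIV"
      by (subst has_integral_restrict_UNIV) (rule kern_has_integral[OF a0 a1 t0])
    moreover have "(\<lambda>s. if s \<in> {0..t} then (t - s) powr (-a) else 0) = ?f"
      by (auto simp: indicator_def)
    ultimately show ?thesis by simp
  qed
  have m: "?f \<in> borel_measurable borel" by (intro borel_measurable_times borel_measurable_indicator powr_real_measurable borel_measurable_diff) auto
  have nn: "integral\<^sup>N lborel ?f = t powr (1-a) / (1-a)"
    by (rule nn_integral_has_integral_lborel[OF m _ hi]) (auto simp: indicator_def)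
  have int: "integrable lborel ?f"
    by (rule integrableI_nonneg) (use m nn in \<open>auto simp: indicator_def\<close>)
  then show "set_integrable lborel {0..t} (\<lambda>s. (t - s) powr (-a))"
    by (simp add: set_integrable_def)
  have "(?f has_integral (integral\<^sup>L lborel ?f)) UNIV"
    by (rule has_integral_integral_real[OF int])
  then have "integral\<^sup>L lborel ?f = t powr (1-a) / (1-a)"
    using hi has_integral_unique by blast
  then show "(LINT s:{0..t}|lborel. (t - s) powr (-a)) = t powr (1-a) / (1-a)"
    by (simp add: set_lebesgue_integral_def)
qed


lemma parallelogram_mid:
  fixes x a b :: "'a::real_inner"
  shows "(norm (a - b))\<^sup>2 = 2 * (norm (x - a))\<^sup>2 + 2 * (norm (x - b))\<^sup>2 - 4 * (norm (x - (1/2) *\<^sub>R (a + b)))\<^sup>2"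
  unfolding power2_norm_eq_inner
  by (simp add: inner_commute algebra_simps)

lemma proj_exists:
  fixes H0 :: "'a::{real_inner,banach} set" and x :: 'a
  assumes sub: "subspace H0" and cl: "closed H0"
  shows "\<exists>p\<in>H0. \<forall>y\<in>H0. inner (x - p) y = 0"
proof -
  have ne: "H0 \<noteq> {}" using sub subspace_0 by blast
  define d where "d = infdist x H0"
  have d0: "0 \<le> d" unfolding d_def by (rule infdist_nonneg)
  have dle: "d \<le> dist x z" if "z \<in> H0" for z unfolding d_def using that by (rule infdist_le)
  have "\<exists>y. y \<in> H0 \<and> dist x y < d + 1 / real (Suc n)" for n
  proof -
    have "(INF a\<in>H0. dist x a) < d + 1 / real (Suc n)"
      using infdist_notempty[OF ne, of x] d_def by simp
    moreover have "bdd_below ((\<lambda>a. dist x a) ` H0)" by (rule bdd_belowI[of _ 0]) auto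
    ultimately show ?thesis using cINF_less_iff[OF ne, of "\<lambda>a. dist x a"] by auto
  qed
  then obtain y where yH: "\<And>n. y n \<in> H0" and yd: "\<And>n. dist x (y n) < d + 1 / real (Suc n)"
    by metis
  define e where "e n = 1 / real (Suc n)" for n
  have e0: "0 < e n" for n by (simp add: e_def)
  have sq: "(norm (x - y n))\<^sup>2 \<le> d\<^sup>2 + (2*d+1) * e n" for n
  proof -
    have "norm (x - y n) \<le> d + e n" using yd[of n] by (simp add: dist_norm e_def)
    then have "(norm (x - y n))\<^sup>2 \<le> (d + e n)\<^sup>2" by (rule power_mono) simp
    also have "\<dots> = d\<^sup>2 + 2*d*e n + e n * e n" by (simp add: power2_eq_square algebra_simps)
    also have "e n \<le> 1" by (simp add: e_def)
    then have "e n * e n \<le> e n" using e0[of n] by (intro mult_right_le_one_le) auto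
    then have "d\<^sup>2 + 2*d*e n + e n * e n \<le> d\<^sup>2 + (2*d+1) * e n" by (simp add: algebra_simps)
    finally show ?thesis .
  qed
  have cauchy_bound: "(norm (y m - y n))\<^sup>2 \<le> 2 * (2*d+1) * (e m + e n)" for m n
  proof -
    have mid: "(1/2) *\<^sub>R (y m + y n) \<in> H0"
      using sub yH by (simp add: subspace_add subspace_scale)
    have "d \<le> norm (x - (1/2) *\<^sub>R (y m + y n))" using dle[OF mid] by (simp add: dist_norm)
    then have "d\<^sup>2 \<le> (norm (x - (1/2) *\<^sub>R (y m + y n)))\<^sup>2" using d0 by (rule power_mono)
    then show ?thesis
      using parallelogram_mid[of "y m" "y n" x] sq[of m] sq[of n] by (simp add: algebra_simps)
  qed
  have e_lim: "e \<longlonglongrightarrow> 0" unfolding e_def using LIMSEQ_inverse_real_of_nat by (simp add: inverse_eq_divide) 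
  have "Cauchy y"
  proof (rule metric_CauchyI)
    fix r :: real assume r: "0 < r"
    define c where "c = 2 * (2*d+1)"
    have c0: "0 < c" using d0 by (simp add: c_def)
    have "\<forall>\<^sub>F n in sequentially. e n < r\<^sup>2 / (2*c)"
      using e_lim r c0 by (auto simp: order_tendsto_iff)
    then obtain N where N: "\<And>n. n \<ge> N \<Longrightarrow> e n < r\<^sup>2 / (2*c)" by (auto simp: eventually_sequentially)
    show "\<exists>M. \<forall>m\<ge>M. \<forall>n\<ge>M. dist (y m) (y n) < r"
    proof (intro exI allI impI)
      fix m n assume m: "N \<le> m" and n: "N \<le> n"
      have "(norm (y m - y n))\<^sup>2 \<le> c * (e m + e n)" using cauchy_bound by (simp add: c_def)
      also have "\<dots> < c * (r\<^sup>2 / (2*c) + r\<^sup>2 / (2*c))"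
        using N[OF m] N[OF n] c0 by (intro mult_strict_left_mono) auto
      also have "\<dots> = r\<^sup>2" using c0 by (simp add: field_simps)
      finally have "(norm (y m - y n))\<^sup>2 < r\<^sup>2" .
      then show "dist (y m) (y n) < r" using r by (simp add: dist_norm power_less_imp_less_base)
    qed
  qed
  then obtain p where yp: "y \<longlonglongrightarrow> p" using convergent_eq_Cauchy[of y] by (auto simp: convergent_def)
  have pH: "p \<in> H0" using closed_sequentially[OF cl, of y p] yH yp by simp
  have "(\<lambda>n. dist x (y n)) \<longlonglongrightarrow> dist x p" by (intro tendsto_intros yp)
  moreover have "(\<lambda>n. dist x (y n)) \<longlonglongrightarrow> d"
  proof (rule tendsto_sandwich[of "\<lambda>_. d" _ _ "\<lambda>n. d + e n"])
    show "\<forall>\<^sub>F n in sequentially. d \<le> dist x (y n)" using dle yH by simp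
    show "\<forall>\<^sub>F n in sequentially. dist x (y n) \<le> d + e n" using yd by (simp add: e_def less_imp_le)
    show "(\<lambda>n. d + e n) \<longlonglongrightarrow> d" using tendsto_add[OF tendsto_const e_lim] by simp
  qed simp
  ultimately have dp: "dist x p = d" by (rule LIMSEQ_unique)
  show ?thesis
  proof (intro bexI[OF _ pH] ballI)
    fix z assume zH: "z \<in> H0"
    show "inner (x - p) z = 0"
    proof (cases "z = 0")
      case True then show ?thesis by simp
    next
      case False
      define c where "c = inner (x - p) z / (norm z)\<^sup>2"
      have nz: "(norm z)\<^sup>2 > 0" using False by simp
      have "p + c *\<^sub>R z \<in> H0" using sub pH zH by (simp add: subspace_add subspace_scale)
      then have "norm (x - p) \<le> norm (x - (p + c *\<^sub>R z))" using dle dp by (simp add: dist_norm)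
      then have "(norm (x - p))\<^sup>2 \<le> (norm (x - p - c *\<^sub>R z))\<^sup>2"
        by (simp add: power_mono algebra_simps)
      also have "(norm (x - p - c *\<^sub>R z))\<^sup>2 = (norm (x - p))\<^sup>2 - 2 * c * inner (x - p) z + c\<^sup>2 * (norm z)\<^sup>2"
        unfolding power2_norm_eq_inner
        by (simp add: inner_commute algebra_simps power2_eq_square)
      also have "c\<^sup>2 * (norm z)\<^sup>2 = c * inner (x - p) z"
        using nz by (simp add: c_def power2_eq_square field_simps)
      finally have "0 \<le> - c * inner (x - p) z" by simp
      then have "(inner (x - p) z)\<^sup>2 / (norm z)\<^sup>2 \<le> 0"
        by (simp add: c_def power2_eq_square)
      then have "(inner (x - p) z)\<^sup>2 \<le> 0" using nz by (simp add: divide_le_0_iff)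
      then show ?thesis by simp
    qed
  qed
qed

definition proj :: "'a::{real_inner,banach} set \<Rightarrow> 'a \<Rightarrow> 'a" where
  "proj H0 x = (SOME p. p \<in> H0 \<and> (\<forall>y\<in>H0. inner (x - p) y = 0))"

context
  fixes H0 :: "'a::{real_inner,banach} set"
  assumes sub: "subspace H0" and cl: "closed H0"
begin

lemma proj_prop: "proj H0 x \<in> H0" "\<And>y. y \<in> H0 \<Longrightarrow> inner (x - proj H0 x) y = 0"
proof -
  have "proj H0 x \<in> H0 \<and> (\<forall>y\<in>H0. inner (x - proj H0 x) y = 0)"
  proof -
    obtain p where "p \<in> H0" "\<forall>y\<in>H0. inner (x - p) y = 0" using proj_exists[OF sub cl, of x] by auto
    then have "\<exists>p. p \<in> H0 \<and> (\<forall>y\<in>H0. inner (x - p) y = 0)" by auto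
    from someI_ex[OF this] show ?thesis unfolding proj_def .
  qed
  then show "proj H0 x \<in> H0" "\<And>y. y \<in> H0 \<Longrightarrow> inner (x - proj H0 x) y = 0" by auto
qed

lemma proj_unique:
  assumes "p \<in> H0" "\<And>y. y \<in> H0 \<Longrightarrow> inner (x - p) y = 0"
  shows "proj H0 x = p"
proof -
  have d: "proj H0 x - p \<in> H0" using sub proj_prop(1) assms(1) by (simp add: subspace_diff)
  have "inner (proj H0 x - p) (proj H0 x - p) = inner (x - p) (proj H0 x - p) - inner (x - proj H0 x) (proj H0 x - p)"
    by (simp add: inner_diff_left)
  also have "\<dots> = 0" using assms(2)[OF d] proj_prop(2)[OF d] by simp
  finally show ?thesis by simp
qed

lemma proj_id: "x \<in> H0 \<Longrightarrow> proj H0 x = x"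
  by (rule proj_unique) auto

lemma proj_norm: "norm (proj H0 x) \<le> norm x"
proof -
  have "(norm (proj H0 x))\<^sup>2 = inner x (proj H0 x) - inner (x - proj H0 x) (proj H0 x)"
    by (simp add: inner_diff_left power2_norm_eq_inner)
  also have "\<dots> = inner x (proj H0 x)" using proj_prop by simp
  also have "\<dots> \<le> norm x * norm (proj H0 x)" by (rule norm_cauchy_schwarz)
  finally have "norm (proj H0 x) * norm (proj H0 x) \<le> norm x * norm (proj H0 x)"
    by (simp add: power2_eq_square)
  then show ?thesis
    by (cases "norm (proj H0 x) = 0") (auto simp: mult_le_cancel_right)
qed

lemma proj_bounded_linear: "bounded_linear (proj H0)"
proof (rule bounded_linear_intro[where K=1])
  fix x y :: 'a and r :: real
  show "proj H0 (x + y) = proj H0 x + proj H0 y"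
  proof (rule proj_unique)
    show "proj H0 x + proj H0 y \<in> H0" using sub proj_prop(1) by (simp add: subspace_add)
    fix z assume z: "z \<in> H0"
    have "inner (x + y - (proj H0 x + proj H0 y)) z = inner (x - proj H0 x) z + inner (y - proj H0 y) z"
      by (simp add: inner_diff_left inner_add_left)
    then show "inner (x + y - (proj H0 x + proj H0 y)) z = 0" using proj_prop(2)[OF z] by simp
  qed
  show "proj H0 (r *\<^sub>R x) = r *\<^sub>R proj H0 x"
  proof (rule proj_unique)
    show "r *\<^sub>R proj H0 x \<in> H0" using sub proj_prop(1) by (simp add: subspace_scale)
    fix y assume "y \<in> H0"
    have "inner (r *\<^sub>R x - r *\<^sub>R proj H0 x) y = r * inner (x - proj H0 x) y"
      by (simp add: inner_diff_left algebra_simps)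
    then show "inner (r *\<^sub>R x - r *\<^sub>R proj H0 x) y = 0" using proj_prop(2)[OF \<open>y \<in> H0\<close>] by simp
  qed
  show "norm (proj H0 x) \<le> norm x * 1"
  proof -
    have "(norm (proj H0 x))\<^sup>2 = inner x (proj H0 x) - inner (x - proj H0 x) (proj H0 x)"
      by (simp add: inner_diff_left power2_norm_eq_inner)
    also have "\<dots> = inner x (proj H0 x)" using proj_prop by simp
    also have "\<dots> \<le> norm x * norm (proj H0 x)" by (rule norm_cauchy_schwarz)
    finally have "norm (proj H0 x) * norm (proj H0 x) \<le> norm x * norm (proj H0 x)"
      by (simp add: power2_eq_square)
    then show ?thesis
      by (cases "norm (proj H0 x) = 0") (auto simp: mult_le_cancel_right)
  qed
qed

end

lemma ubp:
  fixes H0 :: "'a::banach set" and F :: "'i \<Rightarrow> 'a \<Rightarrow>\<^sub>L 'b::real_normed_vector"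
  assumes cl: "closed H0" and sub: "subspace H0"
    and pw: "\<And>x. x \<in> H0 \<Longrightarrow> \<exists>B. \<forall>i\<in>I. norm (F i x) \<le> B"
  shows "\<exists>B. \<forall>i\<in>I. \<forall>x\<in>H0. norm (F i x) \<le> B * norm x"
proof -
  let ?X = "top_of_set H0"
  define A where "A n = H0 \<inter> (\<Inter>i\<in>I. {x. norm (F i x) \<le> real n})" for n :: nat
  have cm: "completely_metrizable_space ?X"
    using completely_metrizable_space_closedin[OF completely_metrizable_space_euclidean cl[unfolded closed_closedin]] .
  have clA: "closedin ?X (A n)" for n
    unfolding A_def
  proof (rule closedin_closed_Int)
    show "closed (\<Inter>i\<in>I. {x. norm (F i x) \<le> real n})"
      by (intro closed_INT ballI closed_Collect_le continuous_intros)
  qed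
  have UA: "\<Union>(range A) = H0"
  proof
    show "\<Union>(range A) \<subseteq> H0" unfolding A_def by auto
    show "H0 \<subseteq> \<Union>(range A)"
    proof
      fix x assume x: "x \<in> H0"
      obtain B where B: "\<forall>i\<in>I. norm (F i x) \<le> B" using pw[OF x] by blast
      obtain n :: nat where "B \<le> real n" using real_arch_simple by blast
      then have "\<forall>i\<in>I. norm (F i x) \<le> real n" using B by (meson order_trans)
      then have "x \<in> A n" unfolding A_def using x by simp
      then show "x \<in> \<Union>(range A)" by blast
    qed
  qed
  have "\<exists>n. ?X interior_of (A n) \<noteq> {}"
  proof (rule ccontr)
    assume "\<not> ?thesis"
    then have emp: "\<And>n. ?X interior_of (A n) = {}" by blast
    have "?X interior_of \<Union>(range A) = {}"
    proof (rule Baire_category_alt)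
      show "completely_metrizable_space ?X \<or> locally_compact_space ?X \<and> regular_space ?X" using cm by (rule disjI1)
      show "countable (range A)" by simp
      fix T assume "T \<in> range A"
      then obtain m where "T = A m" by blast
      then show "closedin ?X T \<and> ?X interior_of T = {}" using clA emp by simp
    qed
    moreover have "?X interior_of \<Union>(range A) = H0"
      using UA interior_of_topspace[of ?X] by simp
    moreover have "0 \<in> H0" using sub subspace_0 by blast
    ultimately show False by simp
  qed
  then obtain n x0 where x0: "x0 \<in> ?X interior_of (A n)" by blast
  then obtain U where U: "openin ?X U" "x0 \<in> U" "U \<subseteq> A n"
    unfolding interior_of_def by auto
  have "\<exists>e>0. \<forall>x'\<in>H0. dist x' x0 < e \<longrightarrow> x' \<in> U"
    using U(1) U(2) unfolding openin_euclidean_subtopology_iff by simp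
  then obtain r where r: "r > 0" "\<And>x'. x' \<in> H0 \<Longrightarrow> dist x' x0 < r \<Longrightarrow> x' \<in> U"
    by auto
  have x0H: "x0 \<in> H0" using U unfolding A_def by blast
  have bnd: "\<And>i z. i \<in> I \<Longrightarrow> z \<in> H0 \<Longrightarrow> norm (x0 + z - x0) < r \<Longrightarrow> norm (F i z) \<le> 2 * real n"
  proof -
    fix i z assume i: "i \<in> I" and z: "z \<in> H0" and zr: "norm (x0 + z - x0) < r"
    have "x0 + z \<in> H0" using sub x0H z by (simp add: subspace_add)
    moreover have "dist (x0 + z) x0 < r" using zr by (simp add: dist_norm)
    ultimately have "x0 + z \<in> U" by (rule r(2))
    then have "x0 + z \<in> A n" using U(3) by (rule subsetD[rotated])
    then have a: "norm (F i (x0 + z)) \<le> real n" using i unfolding A_def by blast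
    have b: "norm (F i x0) \<le> real n" using U i unfolding A_def by blast
    have "F i z = F i (x0 + z) - F i x0" by (simp add: blinfun.add_right)
    then have "norm (F i z) \<le> norm (F i (x0 + z)) + norm (F i x0)"
      by (metis norm_triangle_ineq4)
    then show "norm (F i z) \<le> 2 * real n" using a b by simp
  qed
  show ?thesis
  proof (intro exI ballI)
    fix i x assume i: "i \<in> I" and x: "x \<in> H0"
    show "norm (F i x) \<le> (4 * real n / r) * norm x"
    proof (cases "x = 0")
      case True then show ?thesis by simp
    next
      case False
      define c where "c = r / (2 * norm x)"
      have c0: "c > 0" using False r by (simp add: c_def)
      have "c *\<^sub>R x \<in> H0" using sub x by (simp add: subspace_scale)
      moreover have "norm (x0 + c *\<^sub>R x - x0) < r" using c0 False r by (simp add: c_def)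
      ultimately have "norm (F i (c *\<^sub>R x)) \<le> 2 * real n" by (rule bnd[OF i])
      then have "c * norm (F i x) \<le> 2 * real n" using c0 by (simp add: blinfun.scaleR_right)
      then have "norm (F i x) \<le> 2 * real n / c" using c0 by (simp add: field_simps)
      also have "\<dots> = (4 * real n / r) * norm x" using r False by (simp add: c_def field_simps)
      finally show ?thesis .
    qed
  qed
qed


lemma indicator_Icc_measurable:
  fixes f :: "real \<Rightarrow> 'b::{banach,second_countable_topology}"
  assumes "continuous_on {a<..<b} f"
  shows "(\<lambda>s. indicator {a..b} s *\<^sub>R f s) \<in> borel_measurable borel"
proof -
  have eq: "(\<lambda>s. indicator {a..b} s *\<^sub>R f s) =
    (\<lambda>s. indicator {a<..<b} s *\<^sub>R f s + indicator ({a..b} \<inter> {a}) s *\<^sub>R f a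
        + indicator ({a..b} \<inter> {b} - {a}) s *\<^sub>R f b)"
    by (rule ext) (auto simp: indicator_def)
  have m1: "(\<lambda>s. indicator {a<..<b} s *\<^sub>R f s) \<in> borel_measurable borel"
    by (rule borel_measurable_continuous_on_indicator) (use assms in auto)
  show ?thesis unfolding eq
    by (intro borel_measurable_add m1 borel_measurable_scaleR borel_measurable_indicator borel_measurable_const) auto
qed

lemma bounded_on_Icc:
  fixes g :: "real \<Rightarrow> 'b::real_normed_vector"
  assumes "continuous_on {a..b} g"
  obtains B where "B \<ge> 0" "\<And>s. s \<in> {a..b} \<Longrightarrow> norm (g s) \<le> B"
proof -
  have "bounded (g ` {a..b})"
    by (rule compact_imp_bounded[OF compact_continuous_image[OF assms compact_Icc]])
  then obtain B where B: "\<And>x. x \<in> g ` {a..b} \<Longrightarrow> norm x \<le> B" by (auto simp: bounded_iff)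
  show ?thesis
    by (rule that[of "max B 0"]) (use B in \<open>force\<close>)+
qed

lemma scal_integrable:
  fixes h :: "real \<Rightarrow> real"
  assumes a0: "0 \<le> a" and a1: "a < 1" and t0: "0 \<le> t" and h: "continuous_on {0..t} h"
  shows "set_integrable lborel {0..t} (\<lambda>s. (t - s) powr (-a) * h s)"
proof -
  obtain B where B0: "B \<ge> 0" and B: "\<And>s. s \<in> {0..t} \<Longrightarrow> norm (h s) \<le> B"
    using bounded_on_Icc[OF h] by blast
  have int: "set_integrable lborel {0..t} (\<lambda>s. B * (t - s) powr (-a))"
    using kern_integrable(1)[OF a0 a1 t0] by (rule set_integrable_mult_right)
  have m: "(\<lambda>s. indicator {0..t} s *\<^sub>R ((t - s) powr (-a) * h s)) \<in> borel_measurable borel"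
  proof -
    have "(\<lambda>s. indicator {0..t} s *\<^sub>R h s) \<in> borel_measurable borel"
      by (rule borel_measurable_continuous_on_indicator) (use h in auto)
    then have "(\<lambda>s. (t - s) powr (-a) * (indicator {0..t} s *\<^sub>R h s)) \<in> borel_measurable borel"
      by (intro borel_measurable_times powr_real_measurable borel_measurable_diff) auto
    moreover have "(\<lambda>s. (t - s) powr (-a) * (indicator {0..t} s *\<^sub>R h s)) =
        (\<lambda>s. indicator {0..t} s *\<^sub>R ((t - s) powr (-a) * h s))"
      by (rule ext) (simp add: indicator_def)
    ultimately show ?thesis by simp
  qed
  show ?thesis unfolding set_integrable_def
  proof (rule Bochner_Integration.integrable_bound[OF int[unfolded set_integrable_def] m[folded measurable_lborel2]])
    show "AE x in lborel. norm (indicator {0..t} x *\<^sub>R ((t - x) powr - a * h x))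
        \<le> norm (indicator {0..t} x *\<^sub>R (B * (t - x) powr - a))"
    proof (rule AE_I2)
      fix s :: real
      show "norm (indicator {0..t} s *\<^sub>R ((t - s) powr - a * h s))
        \<le> norm (indicator {0..t} s *\<^sub>R (B * (t - s) powr - a))"
      proof (cases "s \<in> {0..t}")
        case True
        have "\<bar>(t - s) powr - a * h s\<bar> = (t - s) powr - a * \<bar>h s\<bar>" by (simp add: abs_mult)
        also have "\<dots> \<le> (t - s) powr - a * B" using B[OF True] by (intro mult_left_mono) auto
        finally show ?thesis using True B0 by (simp add: abs_mult mult.commute)
      qed simp
    qed
  qed
qed

locale vsetup =
  fixes H0 :: "'a::{real_inner,banach,second_countable_topology} set"
    and K :: "real \<Rightarrow> 'a \<Rightarrow>\<^sub>L 'a" and C \<beta> :: real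
  assumes sub: "subspace H0" and cl: "closed H0"
    and beta0: "0 \<le> \<beta>" and beta1: "\<beta> < 1" and C0: "0 \<le> C"
    and K_into: "\<And>t x. t > 0 \<Longrightarrow> K t x \<in> H0"
    and K_bound: "\<And>t x. t > 0 \<Longrightarrow> norm (K t x) \<le> C * t powr (-\<beta>) * norm x"
    and K_cont: "\<And>x. continuous_on {0<..} (\<lambda>t. K t x)"
begin

definition conv :: "real \<Rightarrow> (real \<Rightarrow> 'a) \<Rightarrow> 'a" where
  "conv t g = (LINT s:{0..t}|lborel. K (t - s) (g s))"

lemma K_cont_comp:
  assumes f: "continuous_on S f" and fpos: "\<And>s. s \<in> S \<Longrightarrow> f s > 0" and u: "continuous_on S u"
  shows "continuous_on S (\<lambda>s. K (f s) (u s))"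
  unfolding continuous_on_def
proof
  fix s0 assume s0: "s0 \<in> S"
  have c1: "continuous_on S (\<lambda>s. K (f s) (u s0))"
    by (rule continuous_on_compose2[OF K_cont f]) (use fpos in auto)
  then have t1: "((\<lambda>s. K (f s) (u s0)) \<longlongrightarrow> K (f s0) (u s0)) (at s0 within S)"
    using s0 unfolding continuous_on_def by blast
  have t2: "((\<lambda>s. K (f s) (u s) - K (f s) (u s0)) \<longlongrightarrow> 0) (at s0 within S)"
  proof (rule Lim_null_comparison)
    show "\<forall>\<^sub>F s in at s0 within S. norm (K (f s) (u s) - K (f s) (u s0)) \<le> C * f s powr (-\<beta>) * norm (u s - u s0)"
    proof -
      have "norm (K (f s) (u s) - K (f s) (u s0)) \<le> C * f s powr (-\<beta>) * norm (u s - u s0)" if s: "s \<in> S" for s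
      proof -
        have "K (f s) (u s) - K (f s) (u s0) = K (f s) (u s - u s0)" by (simp add: blinfun.diff_right)
        then show ?thesis using K_bound[OF fpos[OF s]] by simp
      qed
      then show ?thesis unfolding eventually_at_filter by (intro always_eventually) auto
    qed
    have fl: "(f \<longlongrightarrow> f s0) (at s0 within S)" using f s0 unfolding continuous_on_def by blast
    have ul: "(u \<longlongrightarrow> u s0) (at s0 within S)" using u s0 unfolding continuous_on_def by blast
    have "((\<lambda>s. C * f s powr (-\<beta>) * norm (u s - u s0)) \<longlongrightarrow> C * f s0 powr (-\<beta>) * norm (u s0 - u s0)) (at s0 within S)"
      using fpos[OF s0] by (intro tendsto_intros fl ul) auto
    then show "((\<lambda>s. C * f s powr (-\<beta>) * norm (u s - u s0)) \<longlongrightarrow> 0) (at s0 within S)" by simp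
  qed
  have "((\<lambda>s. K (f s) (u s0) + (K (f s) (u s) - K (f s) (u s0))) \<longlongrightarrow> K (f s0) (u s0) + 0) (at s0 within S)"
    by (rule tendsto_add[OF t1 t2])
  then show "((\<lambda>s. K (f s) (u s)) \<longlongrightarrow> K (f s0) (u s0)) (at s0 within S)" by simp
qed

lemma conv_integrable:
  assumes t0: "0 \<le> t" and g: "continuous_on {0..t} g"
  shows "set_integrable lborel {0..t} (\<lambda>s. K (t - s) (g s))"
proof -
  obtain B where B0: "B \<ge> 0" and B: "\<And>s. s \<in> {0..t} \<Longrightarrow> norm (g s) \<le> B"
    using bounded_on_Icc[OF g] by blast
  have int: "set_integrable lborel {0..t} (\<lambda>s. (C * B) * (t - s) powr (-\<beta>))"
    using kern_integrable(1)[OF beta0 beta1 t0] by (rule set_integrable_mult_right)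
  have m: "(\<lambda>s. indicator {0..t} s *\<^sub>R K (t - s) (g s)) \<in> borel_measurable borel"
  proof (rule indicator_Icc_measurable)
    show "continuous_on {0<..<t} (\<lambda>s. K (t - s) (g s))"
      by (rule K_cont_comp) (auto intro!: continuous_intros continuous_on_subset[OF g])
  qed
  show ?thesis unfolding set_integrable_def
  proof (rule Bochner_Integration.integrable_bound[OF int[unfolded set_integrable_def] m[folded measurable_lborel2]])
    show "AE x in lborel. norm (indicator {0..t} x *\<^sub>R K (t - x) (g x))
        \<le> norm (indicator {0..t} x *\<^sub>R (C * B * (t - x) powr - \<beta>))"
      using AE_lborel_singleton[of t]
    proof (rule AE_mp, intro AE_I2 impI)
      fix s :: real assume st: "s \<noteq> t"
      then show "norm (indicator {0..t} s *\<^sub>R K (t - s) (g s))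
        \<le> norm (indicator {0..t} s *\<^sub>R (C * B * (t - s) powr - \<beta>))"
      proof (cases "s \<in> {0..t}")
        case True
        then have ts: "t - s > 0" using st by auto
        have "norm (K (t - s) (g s)) \<le> C * (t - s) powr (-\<beta>) * norm (g s)" by (rule K_bound[OF ts])
        also have "\<dots> \<le> C * (t - s) powr (-\<beta>) * B" using B[OF True] C0 by (intro mult_left_mono) auto
        finally show ?thesis using True C0 B0 by (simp add: abs_mult mult_ac)
      qed simp
    qed
  qed
qed

lemma conv_H0:
  assumes t0: "0 \<le> t" and g: "continuous_on {0..t} g"
  shows "conv t g \<in> H0"
proof -
  let ?P = "proj H0"
  let ?F = "\<lambda>s. indicator {0..t} s *\<^sub>R K (t - s) (g s)"
  have bl: "bounded_linear ?P" by (rule proj_bounded_linear[OF sub cl])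
  have int: "integrable lborel ?F" using conv_integrable[OF t0 g] by (simp add: set_integrable_def)
  have "?P (integral\<^sup>L lborel ?F) = integral\<^sup>L lborel (\<lambda>s. ?P (?F s))"
    by (rule integral_bounded_linear[OF bl int, symmetric])
  also have "\<dots> = integral\<^sup>L lborel ?F"
  proof (rule integral_discrete_difference[where X="{t}"])
    fix s assume "s \<notin> {t}"
    then show "?P (?F s) = ?F s"
    proof (cases "s \<in> {0..t}")
      case True
      then have "t - s > 0" using \<open>s \<notin> {t}\<close> by auto
      then show ?thesis using True proj_id[OF sub cl K_into] by simp
    next
      case False
      then show ?thesis using linear_0[OF bounded_linear.linear[OF bl]] by simp
    qed
  qed auto
  finally have "?P (conv t g) = conv t g" by (simp add: conv_def set_lebesgue_integral_def)
  then show ?thesis using proj_prop(1)[OF sub cl, of "conv t g"] by simp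
qed

lemma conv_norm:
  assumes t0: "0 \<le> t" and g: "continuous_on {0..t} g"
  shows "norm (conv t g) \<le> C * (LINT s:{0..t}|lborel. (t - s) powr (-\<beta>) * norm (g s))"
proof -
  have i1: "set_integrable lborel {0..t} (\<lambda>s. norm (K (t - s) (g s)))"
    by (rule set_integrable_norm[OF conv_integrable[OF t0 g]])
  have gn: "continuous_on {0..t} (\<lambda>s. norm (g s))" by (intro continuous_intros g)
  have i2: "set_integrable lborel {0..t} (\<lambda>s. C * ((t - s) powr (-\<beta>) * norm (g s)))"
    by (rule set_integrable_mult_right) (rule scal_integrable[OF beta0 beta1 t0 gn])
  have "norm (conv t g) \<le> (LINT s:{0..t}|lborel. norm (K (t - s) (g s)))"
    unfolding conv_def by (rule set_integral_norm_bound[OF conv_integrable[OF t0 g]])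
  also have "\<dots> \<le> (LINT s:{0..t}|lborel. C * ((t - s) powr (-\<beta>) * norm (g s)))"
  proof (rule set_integral_mono_AE[OF i1 i2])
    show "AE s\<in>{0..t} in lborel. norm (K (t - s) (g s)) \<le> C * ((t - s) powr - \<beta> * norm (g s))"
      using AE_lborel_singleton[of t]
    proof (rule AE_mp, intro AE_I2 impI)
      fix s :: real assume "s \<noteq> t" "s \<in> {0..t}"
      then have "t - s > 0" by auto
      then show "norm (K (t - s) (g s)) \<le> C * ((t - s) powr - \<beta> * norm (g s))"
        using K_bound by (simp add: mult_ac)
    qed
  qed
  also have "\<dots> = C * (LINT s:{0..t}|lborel. (t - s) powr (-\<beta>) * norm (g s))"
    by simp
  finally show ?thesis .
qed

lemma conv_diff:
  assumes t0: "0 \<le> t" and g1: "continuous_on {0..t} g1" and g2: "continuous_on {0..t} g2"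
  shows "conv t (\<lambda>s. g1 s - g2 s) = conv t g1 - conv t g2"
  unfolding conv_def blinfun.diff_right
  by (rule set_integral_diff(2)[OF conv_integrable[OF t0 g1] conv_integrable[OF t0 g2]])

lemma conv_add:
  assumes t0: "0 \<le> t" and g1: "continuous_on {0..t} g1" and g2: "continuous_on {0..t} g2"
  shows "conv t (\<lambda>s. g1 s + g2 s) = conv t g1 + conv t g2"
  unfolding conv_def blinfun.add_right
  by (rule set_integral_add(2)[OF conv_integrable[OF t0 g1] conv_integrable[OF t0 g2]])

lemma conv_scale: "conv t (\<lambda>s. c *\<^sub>R g s) = c *\<^sub>R conv t g"
  unfolding conv_def blinfun.scaleR_right by simp

lemma conv_cong: "(\<And>s. s \<in> {0..t} \<Longrightarrow> g1 s = g2 s) \<Longrightarrow> conv t g1 = conv t g2"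
  unfolding conv_def by (rule set_lebesgue_integral_cong) auto

end

lemma kern0_integrable:
  fixes a t :: real
  assumes a0: "0 \<le> a" and a1: "a < 1" and t0: "0 \<le> t"
  shows "integrable lborel (\<lambda>s. indicator {0..t} s * s powr (-a))"
proof -
  let ?f = "\<lambda>s. indicator {0..t} s * s powr (-a)"
  have hi: "(?f has_integral (t powr (-a+1) / (-a+1))) UNIV"
  proof -
    have "((\<lambda>s. if s \<in> {0..t} then s powr (-a) else 0) has_integral (t powr (-a+1) / (-a+1))) UNIV"
      by (subst has_integral_restrict_UNIV) (rule has_integral_powr_from_0, use a1 t0 in auto)
    moreover have "(\<lambda>s. if s \<in> {0..t} then s powr (-a) else 0) = ?f"
      by (auto simp: indicator_def)
    ultimately show ?thesis by simp
  qed
  have m: "?f \<in> borel_measurable borel"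
    by (intro borel_measurable_times borel_measurable_indicator powr_real_measurable) auto
  have nn: "integral\<^sup>N lborel ?f = t powr (-a+1) / (-a+1)"
    by (rule nn_integral_has_integral_lborel[OF m _ hi]) (auto simp: indicator_def)
  show ?thesis
    by (rule integrableI_nonneg) (use m nn in \<open>auto simp: indicator_def\<close>)
qed

context vsetup
begin

lemma conv_shift:
  assumes tau: "0 \<le> \<tau>" and eqg: "\<And>s. s \<in> {0..\<tau>} \<Longrightarrow> g s = h s"
  shows "conv \<tau> g = integral\<^sup>L lborel (\<lambda>r. indicator {0..\<tau>} r *\<^sub>R K r (h (\<tau> - r)))"
proof -
  have "conv \<tau> g = integral\<^sup>L lborel (\<lambda>s. indicator {0..\<tau>} s *\<^sub>R K (\<tau> - s) (g s))"
    by (simp add: conv_def set_lebesgue_integral_def)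
  also have "\<dots> = \<bar>-1\<bar> *\<^sub>R integral\<^sup>L lborel (\<lambda>x. indicator {0..\<tau>} (\<tau> + -1 * x) *\<^sub>R K (\<tau> - (\<tau> + -1 * x)) (g (\<tau> + -1 * x)))"
    by (rule lborel_integral_real_affine) simp
  also have "\<dots> = integral\<^sup>L lborel (\<lambda>r. indicator {0..\<tau>} r *\<^sub>R K r (h (\<tau> - r)))"
  proof -
    have "indicator {0..\<tau>} (\<tau> + -1 * x) *\<^sub>R K (\<tau> - (\<tau> + -1 * x)) (g (\<tau> + -1 * x)) =
          indicator {0..\<tau>} x *\<^sub>R K x (h (\<tau> - x))" for x
    proof (cases "x \<in> {0..\<tau>}")
      case True
      then have "\<tau> - x \<in> {0..\<tau>}" by auto
      then show ?thesis using True eqg[of "\<tau> - x"] by (simp add: indicator_def)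
    next
      case False
      then have "\<tau> + -1 * x \<notin> {0..\<tau>}" by auto
      then show ?thesis using False by simp
    qed
    then show ?thesis by simp
  qed
  finally show ?thesis .
qed

lemma conv_cont:
  assumes T0: "0 \<le> T" and g: "continuous_on {0..T} g"
  shows "continuous_on {0..T} (\<lambda>\<tau>. conv \<tau> g)"
proof -
  define gt where "gt s = g (max 0 (min T s))" for s
  have gtc: "continuous_on UNIV gt"
    unfolding gt_def by (rule continuous_on_compose2[OF g]) (auto intro!: continuous_intros simp: T0)
  obtain B where B0: "B \<ge> 0" and B: "\<And>s. s \<in> {0..T} \<Longrightarrow> norm (g s) \<le> B"
    using bounded_on_Icc[OF g] by blast
  have gtB: "norm (gt s) \<le> B" for s unfolding gt_def by (rule B) (use T0 in auto)
  define \<Phi> where "\<Phi> \<tau> = integral\<^sup>L lborel (\<lambda>r. indicator {0..\<tau>} r *\<^sub>R K r (gt (\<tau> - r)))" for \<tau>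
  have eq: "conv \<tau> g = \<Phi> \<tau>" if "\<tau> \<in> {0..T}" for \<tau>
    unfolding \<Phi>_def by (rule conv_shift) (use that in \<open>auto simp: gt_def\<close>)
  define w where "w r = indicator {0..T} r * (C * B * r powr (-\<beta>))" for r
  have wint: "integrable lborel w"
  proof -
    have "integrable lborel (\<lambda>r. (C * B) * (indicator {0..T} r * r powr (-\<beta>)))"
      by (rule integrable_mult_right) (rule kern0_integrable[OF beta0 beta1 T0])
    then show ?thesis unfolding w_def by (simp add: mult_ac)
  qed
  have meas: "(\<lambda>r. indicator {0..\<tau>} r *\<^sub>R K r (gt (\<tau> - r))) \<in> borel_measurable lborel" for \<tau>
  proof -
    have "continuous_on {0<..<\<tau>} (\<lambda>r. K r (gt (\<tau> - r)))"
      by (rule K_cont_comp) (auto intro!: continuous_intros continuous_on_compose2[OF gtc])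
    then show ?thesis using indicator_Icc_measurable by simp
  qed
  have "continuous_on {0..T} \<Phi>"
    unfolding continuous_on_sequentially
  proof (intro allI ballI impI, elim conjE)
    fix x :: "nat \<Rightarrow> real" and a assume a: "a \<in> {0..T}" and xin: "\<forall>n. x n \<in> {0..T}" and xa: "x \<longlonglongrightarrow> a"
    have "(\<lambda>i. integral\<^sup>L lborel (\<lambda>r. indicator {0..x i} r *\<^sub>R K r (gt (x i - r))))
           \<longlonglongrightarrow> integral\<^sup>L lborel (\<lambda>r. indicator {0..a} r *\<^sub>R K r (gt (a - r)))"
    proof (rule integral_dominated_convergence[where w=w])
      show "(\<lambda>r. indicator {0..a} r *\<^sub>R K r (gt (a - r))) \<in> borel_measurable lborel" by (rule meas)
      show "\<And>i. (\<lambda>r. indicator {0..x i} r *\<^sub>R K r (gt (x i - r))) \<in> borel_measurable lborel" by (rule meas)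
      show "integrable lborel w" by (rule wint)
      show "AE r in lborel. (\<lambda>i. indicator {0..x i} r *\<^sub>R K r (gt (x i - r))) \<longlonglongrightarrow> indicator {0..a} r *\<^sub>R K r (gt (a - r))"
        using AE_lborel_singleton[of a]
      proof (rule AE_mp, intro AE_I2 impI)
        fix r :: real assume ra: "r \<noteq> a"
        have gl: "(\<lambda>i. K r (gt (x i - r))) \<longlonglongrightarrow> K r (gt (a - r))"
        proof -
          have "(\<lambda>i. gt (x i - r)) \<longlonglongrightarrow> gt (a - r)"
            by (rule continuous_on_tendsto_compose[OF gtc]) (auto intro!: tendsto_intros xa)
          then show ?thesis by (rule blinfun.tendsto[OF tendsto_const])
        qed
        show "(\<lambda>i. indicator {0..x i} r *\<^sub>R K r (gt (x i - r))) \<longlonglongrightarrow> indicator {0..a} r *\<^sub>R K r (gt (a - r))"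
        proof (cases "r < 0")
          case True then show ?thesis by (simp add: indicator_def)
        next
          case False
          show ?thesis
          proof (cases "r < a")
            case True
            have ev: "\<forall>\<^sub>F i in sequentially. r < x i" using xa True by (simp add: order_tendsto_iff)
            have "\<forall>\<^sub>F i in sequentially. K r (gt (x i - r)) = indicator {0..x i} r *\<^sub>R K r (gt (x i - r))"
              using ev by eventually_elim (use False in \<open>simp add: indicator_def\<close>)
            with gl have "(\<lambda>i. indicator {0..x i} r *\<^sub>R K r (gt (x i - r))) \<longlonglongrightarrow> K r (gt (a - r))"
              by (rule Lim_transform_eventually)
            moreover have Z: "indicator {0..a} r *\<^sub>R K r (gt (a - r)) = K r (gt (a - r))"
              using False True by (simp add: indicator_def)
            ultimately show ?thesis by (simp only: Z)
          next
            case False2: False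
            then have ar: "a < r" using ra by simp
            have ev: "\<forall>\<^sub>F i in sequentially. x i < r" using xa ar by (simp add: order_tendsto_iff)
            have "\<forall>\<^sub>F i in sequentially. (0::'a) = indicator {0..x i} r *\<^sub>R K r (gt (x i - r))"
              using ev by eventually_elim (simp add: indicator_def)
            with tendsto_const[of "0::'a" sequentially]
            have "(\<lambda>i. indicator {0..x i} r *\<^sub>R K r (gt (x i - r))) \<longlonglongrightarrow> 0"
              by (rule Lim_transform_eventually)
            moreover have Z: "indicator {0..a} r *\<^sub>R K r (gt (a - r)) = 0"
              using ar by (simp add: indicator_def)
            ultimately show ?thesis by (simp only: Z)
          qed
        qed
      qed
      fix i
      show "AE r in lborel. norm (indicator {0..x i} r *\<^sub>R K r (gt (x i - r))) \<le> w r"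
        using AE_lborel_singleton[of 0]
      proof (rule AE_mp, intro AE_I2 impI)
        fix r :: real assume r0: "r \<noteq> 0"
        show "norm (indicator {0..x i} r *\<^sub>R K r (gt (x i - r))) \<le> w r"
        proof (cases "r \<in> {0..x i}")
          case True
          then have rp: "r > 0" using r0 by auto
          have rT: "r \<in> {0..T}" using True xin[rule_format, of i] by auto
          have "norm (K r (gt (x i - r))) \<le> C * r powr (-\<beta>) * norm (gt (x i - r))" by (rule K_bound[OF rp])
          also have "\<dots> \<le> C * r powr (-\<beta>) * B" using gtB C0 by (intro mult_left_mono) auto
          finally show ?thesis using True rT by (simp add: w_def mult_ac)
        next
          case False
          then show ?thesis using C0 B0 by (simp add: w_def)
        qed
      qed
    qed
    then show "(\<Phi> \<circ> x) \<longlonglongrightarrow> \<Phi> a" by (simp add: \<Phi>_def o_def)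
  qed
  then show ?thesis by (rule continuous_on_cong[THEN iffD1, rotated 2]) (use eq in auto)
qed

end

lemma exp_le_powr:
  fixes x \<gamma> :: real
  assumes x: "x > 0" and g0: "0 < \<gamma>" and g1: "\<gamma> \<le> 1"
  shows "exp (-x) \<le> x powr (-\<gamma>)"
proof -
  have "x powr \<gamma> \<le> exp x"
  proof (cases "x \<le> 1")
    case True
    then have "x powr \<gamma> \<le> 1" using x g0 by (intro powr_le1) auto
    also have "1 \<le> exp x" using x by simp
    finally show ?thesis .
  next
    case False
    then have "x powr \<gamma> \<le> x powr 1" using g1 by (intro powr_mono) auto
    also have "\<dots> = x" using x by simp
    also have "x \<le> exp x" using exp_ge_add_one_self[of x] by linarith
    finally show ?thesis .
  qed
  then have "inverse (exp x) \<le> inverse (x powr \<gamma>)" using x by (intro le_imp_inverse_le) auto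
  then show ?thesis using x by (simp add: exp_minus powr_minus)
qed

context vsetup
begin

definition gam where "gam = (1 - \<beta>) / 2"

lemma gam_pos: "0 < gam" and gam_le: "gam \<le> 1" and gam_sum: "1 - (\<beta> + gam) = gam" and bg1: "\<beta> + gam < 1"
  using beta0 beta1 by (auto simp: gam_def field_simps)

lemma kappa_integrable:
  assumes t0: "0 \<le> t"
  shows "set_integrable lborel {0..t} (\<lambda>s. (t - s) powr (-\<beta>) * exp (-l * (t - s)))"
  by (rule scal_integrable[OF beta0 beta1 t0]) (intro continuous_intros)

lemma kappa_bound:
  assumes l: "l > 0" and t0: "0 \<le> t"
  shows "(LINT s:{0..t}|lborel. (t - s) powr (-\<beta>) * exp (-l * (t - s))) \<le> l powr (-gam) * (t powr gam / gam)"
proof -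
  have bg0: "0 \<le> \<beta> + gam" using beta0 gam_pos by simp
  have i2: "set_integrable lborel {0..t} (\<lambda>s. l powr (-gam) * (t - s) powr (-(\<beta> + gam)))"
    by (rule set_integrable_mult_right) (rule kern_integrable(1)[OF bg0 bg1 t0])
  have "(LINT s:{0..t}|lborel. (t - s) powr (-\<beta>) * exp (-l * (t - s)))
      \<le> (LINT s:{0..t}|lborel. l powr (-gam) * (t - s) powr (-(\<beta> + gam)))"
  proof (rule set_integral_mono[OF kappa_integrable[OF t0] i2])
    fix s assume s: "s \<in> {0..t}"
    show "(t - s) powr (-\<beta>) * exp (-l * (t - s)) \<le> l powr (-gam) * (t - s) powr (-(\<beta> + gam))"
    proof (cases "s = t")
      case True then show ?thesis by simp
    next
      case False
      then have r: "t - s > 0" using s by auto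
      have "exp (-(l * (t - s))) \<le> (l * (t - s)) powr (-gam)"
        by (rule exp_le_powr) (use r l gam_pos gam_le in auto)
      also have "\<dots> = l powr (-gam) * (t - s) powr (-gam)" using r l by (simp add: powr_mult)
      finally have e: "exp (-l * (t - s)) \<le> l powr (-gam) * (t - s) powr (-gam)" by simp
      have "(t - s) powr (-\<beta>) * exp (-l * (t - s)) \<le> (t - s) powr (-\<beta>) * (l powr (-gam) * (t - s) powr (-gam))"
        by (rule mult_left_mono[OF e]) simp
      also have "\<dots> = l powr (-gam) * ((t - s) powr (-\<beta>) * (t - s) powr (-gam))" by simp
      also have "(t - s) powr (-\<beta>) * (t - s) powr (-gam) = (t - s) powr (-(\<beta> + gam))"
        using r by (simp add: powr_add[symmetric])
      finally show ?thesis .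
    qed
  qed
  also have "\<dots> = l powr (-gam) * (t powr gam / gam)"
    using kern_integrable(2)[OF bg0 bg1 t0] gam_sum by simp
  finally show ?thesis .
qed

lemma lam_exists:
  assumes k0: "0 \<le> k" and T0: "0 \<le> T"
  obtains l where "l > 0" "\<And>t. t \<in> {0..T} \<Longrightarrow> k * (LINT s:{0..t}|lborel. (t - s) powr (-\<beta>) * exp (-l * (t - s))) \<le> 1/2"
proof -
  define Q where "Q = k * T powr gam / gam"
  have Q0: "0 \<le> Q" using k0 gam_pos by (simp add: Q_def)
  define l where "l = (2 * Q + 1) powr (1 / gam)"
  have l0: "l > 0" using Q0 by (simp add: l_def)
  have lg: "l powr gam = 2 * Q + 1" using Q0 gam_pos by (simp add: l_def powr_powr)
  have lmg: "l powr (-gam) = 1 / (2 * Q + 1)" using lg l0 by (simp add: powr_minus_divide)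
  show ?thesis
  proof (rule that[OF l0])
    fix t assume t: "t \<in> {0..T}"
    have "k * (LINT s:{0..t}|lborel. (t - s) powr (-\<beta>) * exp (-l * (t - s))) \<le> k * (l powr (-gam) * (t powr gam / gam))"
      using kappa_bound[OF l0, of t] t k0 by (intro mult_left_mono) auto
    also have "\<dots> \<le> k * (l powr (-gam) * (T powr gam / gam))"
      using t k0 gam_pos l0 by (intro mult_left_mono divide_right_mono powr_mono2) auto
    also have "\<dots> = Q / (2 * Q + 1)" using lmg by (simp add: Q_def)
    also have "\<dots> \<le> 1/2" using Q0 by (simp add: field_simps)
    finally show "k * (LINT s:{0..t}|lborel. (t - s) powr (-\<beta>) * exp (-l * (t - s))) \<le> 1/2" .
  qed
qed

lemma gronwall:
  assumes T0: "0 \<le> T" and k0: "0 \<le> k"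
  obtains c where "c \<ge> 0" "\<And>w a t. continuous_on {0..T} w \<Longrightarrow> 0 \<le> a \<Longrightarrow>
     (\<And>t. t \<in> {0..T} \<Longrightarrow> w t \<le> a + k * (LINT s:{0..t}|lborel. (t - s) powr (-\<beta>) * w s)) \<Longrightarrow>
     t \<in> {0..T} \<Longrightarrow> w t \<le> c * a"
proof -
  obtain l where l0: "l > 0" and lk: "\<And>t. t \<in> {0..T} \<Longrightarrow> k * (LINT s:{0..t}|lborel. (t - s) powr (-\<beta>) * exp (-l * (t - s))) \<le> 1/2"
    using lam_exists[OF k0 T0] by blast
  show ?thesis
  proof (rule that[of "2 * exp (l * T)"])
    show "0 \<le> 2 * exp (l * T)" by simp
    fix w a t assume w: "continuous_on {0..T} w" and a0: "0 \<le> a"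
      and hyp: "\<And>t. t \<in> {0..T} \<Longrightarrow> w t \<le> a + k * (LINT s:{0..t}|lborel. (t - s) powr (-\<beta>) * w s)"
      and t: "t \<in> {0..T}"
    define \<phi> where "\<phi> s = exp (-l * s) * w s" for s
    have \<phi>c: "continuous_on {0..T} \<phi>" unfolding \<phi>_def by (intro continuous_intros w)
    obtain t0 where t0: "t0 \<in> {0..T}" and t0max: "\<And>s. s \<in> {0..T} \<Longrightarrow> \<phi> s \<le> \<phi> t0"
      using continuous_attains_sup[OF compact_Icc _ \<phi>c] T0 by auto
    define m where "m = \<phi> t0"
    have wle: "w s \<le> exp (l * s) * m" if "s \<in> {0..T}" for s
    proof -
      have "\<phi> s \<le> m" using t0max[OF that] by (simp add: m_def)
      then have "exp (l * s) * \<phi> s \<le> exp (l * s) * m" by (intro mult_left_mono) auto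
      then show ?thesis by (simp add: \<phi>_def exp_minus field_simps)
    qed
    have m2: "m \<le> 2 * a"
    proof (cases "m \<le> 0")
      case True then show ?thesis using a0 by simp
    next
      case False
      then have mpos: "m > 0" by simp
      have t00: "0 \<le> t0" using t0 by simp
      have sub0: "{0..t0} \<subseteq> {0..T}" using t0 by auto
      have wc0: "continuous_on {0..t0} w" using w sub0 by (rule continuous_on_subset)
      have i1: "set_integrable lborel {0..t0} (\<lambda>s. (t0 - s) powr (-\<beta>) * w s)"
        by (rule scal_integrable[OF beta0 beta1 t00 wc0])
      have i2: "set_integrable lborel {0..t0} (\<lambda>s. (t0 - s) powr (-\<beta>) * (exp (l * s) * m))"
        by (rule scal_integrable[OF beta0 beta1 t00]) (intro continuous_intros)
      have "(LINT s:{0..t0}|lborel. (t0 - s) powr (-\<beta>) * w s)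
          \<le> (LINT s:{0..t0}|lborel. (t0 - s) powr (-\<beta>) * (exp (l * s) * m))"
        by (rule set_integral_mono[OF i1 i2]) (use wle sub0 in \<open>auto intro!: mult_left_mono\<close>)
      also have "\<dots> = (LINT s:{0..t0}|lborel. (m * exp (l * t0)) * ((t0 - s) powr (-\<beta>) * exp (-l * (t0 - s))))"
      proof (rule set_lebesgue_integral_cong)
        show "\<forall>x. x \<in> {0..t0} \<longrightarrow> (t0 - x) powr - \<beta> * (exp (l * x) * m) =
            m * exp (l * t0) * ((t0 - x) powr - \<beta> * exp (- l * (t0 - x)))"
        proof (intro allI impI)
          fix x
          have "l * t0 + (- l * (t0 - x)) = l * x" by (simp add: algebra_simps)
          then have "exp (l * t0) * exp (- l * (t0 - x)) = exp (l * x)"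
            by (simp only: exp_add[symmetric])
          then show "(t0 - x) powr - \<beta> * (exp (l * x) * m) =
            m * exp (l * t0) * ((t0 - x) powr - \<beta> * exp (- l * (t0 - x)))"
            by (metis (no_types, lifting) mult.assoc mult.commute)
        qed
      qed simp
      also have "\<dots> = (m * exp (l * t0)) * (LINT s:{0..t0}|lborel. (t0 - s) powr (-\<beta>) * exp (-l * (t0 - s)))"
        by (rule set_integral_mult_right)
      finally have I: "(LINT s:{0..t0}|lborel. (t0 - s) powr (-\<beta>) * w s)
          \<le> (m * exp (l * t0)) * (LINT s:{0..t0}|lborel. (t0 - s) powr (-\<beta>) * exp (-l * (t0 - s)))" .
      have "k * (LINT s:{0..t0}|lborel. (t0 - s) powr (-\<beta>) * w s)
          \<le> (m * exp (l * t0)) * (k * (LINT s:{0..t0}|lborel. (t0 - s) powr (-\<beta>) * exp (-l * (t0 - s))))"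
        using mult_left_mono[OF I k0] by (simp add: mult_ac)
      also have "\<dots> \<le> (m * exp (l * t0)) * (1/2)"
        using lk[OF t0] mpos by (intro mult_left_mono) auto
      finally have "w t0 \<le> a + m * exp (l * t0) / 2" using hyp[OF t0] by simp
      then have "exp (-l * t0) * w t0 \<le> exp (-l * t0) * (a + m * exp (l * t0) / 2)"
        by (intro mult_left_mono) auto
      also have "\<dots> = exp (-l * t0) * a + m * (exp (-l * t0) * exp (l * t0)) / 2"
        by (simp add: algebra_simps)
      also have "\<dots> = exp (-l * t0) * a + m / 2"
      proof -
        have "exp (-l * t0) * exp (l * t0) = 1" by (simp add: exp_minus_inverse[of "l * t0", symmetric] mult.commute)
        then show ?thesis by simp
      qed
      also have "exp (-l * t0) * a \<le> 1 * a" using l0 t00 a0 by (intro mult_right_mono) auto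
      finally have "m \<le> a + m / 2" by (simp add: m_def \<phi>_def)
      then show ?thesis by simp
    qed
    show "w t \<le> 2 * exp (l * T) * a"
    proof (cases "m \<ge> 0")
      case True
      have "w t \<le> exp (l * t) * m" by (rule wle[OF t])
      also have "\<dots> \<le> exp (l * T) * m" using True t l0 by (intro mult_right_mono) auto
      also have "\<dots> \<le> exp (l * T) * (2 * a)" using m2 by (intro mult_left_mono) auto
      finally show ?thesis by simp
    next
      case False
      have "w t \<le> exp (l * t) * m" by (rule wle[OF t])
      also have "\<dots> \<le> 0" using False by (simp add: mult_le_0_iff)
      also have "0 \<le> 2 * exp (l * T) * a" using a0 by simp
      finally show ?thesis .
    qed
  qed
qed

end

context vsetup
begin

lemma int_exp_shift:
  "(LINT s:{0..t}|lborel. (t - s) powr (-\<beta>) * (exp (l * s) * m))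
    = (m * exp (l * t)) * (LINT s:{0..t}|lborel. (t - s) powr (-\<beta>) * exp (-l * (t - s)))"
proof -
  have "(LINT s:{0..t}|lborel. (t - s) powr (-\<beta>) * (exp (l * s) * m))
      = (LINT s:{0..t}|lborel. (m * exp (l * t)) * ((t - s) powr (-\<beta>) * exp (-l * (t - s))))"
  proof (rule set_lebesgue_integral_cong)
    show "\<forall>x. x \<in> {0..t} \<longrightarrow> (t - x) powr - \<beta> * (exp (l * x) * m) =
        m * exp (l * t) * ((t - x) powr - \<beta> * exp (- l * (t - x)))"
    proof (intro allI impI)
      fix x
      have "l * t + (- l * (t - x)) = l * x" by (simp add: algebra_simps)
      then have "exp (l * t) * exp (- l * (t - x)) = exp (l * x)"
        by (simp only: exp_add[symmetric])
      then show "(t - x) powr - \<beta> * (exp (l * x) * m) =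
        m * exp (l * t) * ((t - x) powr - \<beta> * exp (- l * (t - x)))"
        by (metis (no_types, lifting) mult.assoc mult.commute)
    qed
  qed simp
  also have "\<dots> = (m * exp (l * t)) * (LINT s:{0..t}|lborel. (t - s) powr (-\<beta>) * exp (-l * (t - s)))"
    by (rule set_integral_mult_right)
  finally show ?thesis .
qed

lemma conv_est:
  assumes t0: "0 \<le> t" and g: "continuous_on {0..t} g" and w: "continuous_on {0..t} w"
    and b: "\<And>s. s \<in> {0..t} \<Longrightarrow> norm (g s) \<le> b + L * w s"
  shows "norm (conv t g) \<le> C * b * (t powr (1 - \<beta>) / (1 - \<beta>))
           + C * L * (LINT s:{0..t}|lborel. (t - s) powr (-\<beta>) * w s)"
proof -
  have gn: "continuous_on {0..t} (\<lambda>s. norm (g s))" by (intro continuous_intros g)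
  have i1: "set_integrable lborel {0..t} (\<lambda>s. (t - s) powr (-\<beta>) * norm (g s))"
    by (rule scal_integrable[OF beta0 beta1 t0 gn])
  have ik: "set_integrable lborel {0..t} (\<lambda>s. b * (t - s) powr (-\<beta>))"
    by (rule set_integrable_mult_right) (rule kern_integrable(1)[OF beta0 beta1 t0])
  have iw: "set_integrable lborel {0..t} (\<lambda>s. L * ((t - s) powr (-\<beta>) * w s))"
    by (rule set_integrable_mult_right) (rule scal_integrable[OF beta0 beta1 t0 w])
  have I: "(LINT s:{0..t}|lborel. (t - s) powr (-\<beta>) * norm (g s))
      \<le> b * (t powr (1 - \<beta>) / (1 - \<beta>)) + L * (LINT s:{0..t}|lborel. (t - s) powr (-\<beta>) * w s)"
  proof -
    have "(LINT s:{0..t}|lborel. (t - s) powr (-\<beta>) * norm (g s))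
        \<le> (LINT s:{0..t}|lborel. b * (t - s) powr (-\<beta>) + L * ((t - s) powr (-\<beta>) * w s))"
    proof (rule set_integral_mono[OF i1 set_integral_add(1)[OF ik iw]])
      fix s assume s: "s \<in> {0..t}"
      have "(t - s) powr (-\<beta>) * norm (g s) \<le> (t - s) powr (-\<beta>) * (b + L * w s)"
        by (rule mult_left_mono[OF b[OF s]]) simp
      then show "(t - s) powr (-\<beta>) * norm (g s) \<le> b * (t - s) powr (-\<beta>) + L * ((t - s) powr (-\<beta>) * w s)"
        by (simp add: algebra_simps)
    qed
    also have "\<dots> = b * (t powr (1 - \<beta>) / (1 - \<beta>)) + L * (LINT s:{0..t}|lborel. (t - s) powr (-\<beta>) * w s)"
      using set_integral_add(2)[OF ik iw] kern_integrable(2)[OF beta0 beta1 t0] by simp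
    finally show ?thesis .
  qed
  have "norm (conv t g) \<le> C * (LINT s:{0..t}|lborel. (t - s) powr (-\<beta>) * norm (g s))"
    by (rule conv_norm[OF t0 g])
  also have "\<dots> \<le> C * (b * (t powr (1 - \<beta>) / (1 - \<beta>)) + L * (LINT s:{0..t}|lborel. (t - s) powr (-\<beta>) * w s))"
    by (rule mult_left_mono[OF I C0])
  also have "\<dots> = C * b * (t powr (1 - \<beta>) / (1 - \<beta>)) + C * L * (LINT s:{0..t}|lborel. (t - s) powr (-\<beta>) * w s)"
    by (simp only: distrib_left mult.assoc)
  finally show ?thesis .
qed

lemma volterra_unique:
  assumes T0: "0 \<le> T" and L0: "0 \<le> L"
    and Flip: "\<And>s x y. s \<in> {0..T} \<Longrightarrow> x \<in> H0 \<Longrightarrow> y \<in> H0 \<Longrightarrow> norm (F s x - F s y) \<le> L * norm (x - y)"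
    and v1: "continuous_on {0..T} v1" "v1 ` {0..T} \<subseteq> H0" "continuous_on {0..T} (\<lambda>s. F s (v1 s))"
    and v2: "continuous_on {0..T} v2" "v2 ` {0..T} \<subseteq> H0" "continuous_on {0..T} (\<lambda>s. F s (v2 s))"
    and e1: "\<And>t. t \<in> {0..T} \<Longrightarrow> v1 t = f t + conv t (\<lambda>s. F s (v1 s))"
    and e2: "\<And>t. t \<in> {0..T} \<Longrightarrow> v2 t = f t + conv t (\<lambda>s. F s (v2 s))"
  shows "\<And>t. t \<in> {0..T} \<Longrightarrow> v1 t = v2 t"
proof -
  have k0: "0 \<le> C * L" using C0 L0 by simp
  obtain c where c0: "c \<ge> 0" and gr: "\<And>w a t. continuous_on {0..T} w \<Longrightarrow> 0 \<le> a \<Longrightarrow>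
     (\<And>t. t \<in> {0..T} \<Longrightarrow> w t \<le> a + (C * L) * (LINT s:{0..t}|lborel. (t - s) powr (-\<beta>) * w s)) \<Longrightarrow>
     t \<in> {0..T} \<Longrightarrow> w t \<le> c * a"
    using gronwall[OF T0 k0] by blast
  define w where "w t = norm (v1 t - v2 t)" for t
  have wc: "continuous_on {0..T} w" unfolding w_def by (intro continuous_intros v1 v2)
  have hyp: "w t \<le> 0 + (C * L) * (LINT s:{0..t}|lborel. (t - s) powr (-\<beta>) * w s)" if t: "t \<in> {0..T}" for t
  proof -
    have t0: "0 \<le> t" using t by simp
    have sub: "{0..t} \<subseteq> {0..T}" using t by auto
    have c1: "continuous_on {0..t} (\<lambda>s. F s (v1 s))" using v1(3) sub by (rule continuous_on_subset)
    have c2: "continuous_on {0..t} (\<lambda>s. F s (v2 s))" using v2(3) sub by (rule continuous_on_subset)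
    have "v1 t - v2 t = conv t (\<lambda>s. F s (v1 s)) - conv t (\<lambda>s. F s (v2 s))" using e1[OF t] e2[OF t] by simp
    also have "\<dots> = conv t (\<lambda>s. F s (v1 s) - F s (v2 s))" by (rule conv_diff[OF t0 c1 c2, symmetric])
    finally have eq: "w t = norm (conv t (\<lambda>s. F s (v1 s) - F s (v2 s)))" by (simp add: w_def)
    have "norm (conv t (\<lambda>s. F s (v1 s) - F s (v2 s))) \<le> C * 0 * (t powr (1 - \<beta>) / (1 - \<beta>))
           + C * L * (LINT s:{0..t}|lborel. (t - s) powr (-\<beta>) * w s)"
    proof (rule conv_est[OF t0])
      show "continuous_on {0..t} (\<lambda>s. F s (v1 s) - F s (v2 s))" by (intro continuous_intros c1 c2)
      show "continuous_on {0..t} w" using wc sub by (rule continuous_on_subset)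
      fix s assume s: "s \<in> {0..t}"
      then have sT: "s \<in> {0..T}" using sub by auto
      show "norm (F s (v1 s) - F s (v2 s)) \<le> 0 + L * w s"
        using Flip[OF sT] v1(2) v2(2) sT by (simp add: w_def image_subset_iff)
    qed
    then show ?thesis using eq by simp
  qed
  fix t assume t: "t \<in> {0..T}"
  have "w t \<le> c * 0" by (rule gr[OF wc _ hyp t]) auto
  then show "v1 t = v2 t" by (simp add: w_def)
qed

lemma volterra_exists:
  assumes T0: "0 \<le> T" and L0: "0 \<le> L"
    and Flip: "\<And>s x y. s \<in> {0..T} \<Longrightarrow> x \<in> H0 \<Longrightarrow> y \<in> H0 \<Longrightarrow> norm (F s x - F s y) \<le> L * norm (x - y)"
    and f: "continuous_on {0..T} f" and fH: "f ` {0..T} \<subseteq> H0"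
    and Fcont: "\<And>v. continuous_on {0..T} v \<Longrightarrow> v ` {0..T} \<subseteq> H0 \<Longrightarrow> continuous_on {0..T} (\<lambda>s. F s (v s))"
  shows "\<exists>v. continuous_on {0..T} v \<and> v ` {0..T} \<subseteq> H0 \<and> (\<forall>t\<in>{0..T}. v t = f t + conv t (\<lambda>s. F s (v s)))"
proof -
  have k0: "0 \<le> C * L" using C0 L0 by simp
  obtain l where l0: "l > 0" and lk: "\<And>t. t \<in> {0..T} \<Longrightarrow> (C * L) * (LINT s:{0..t}|lborel. (t - s) powr (-\<beta>) * exp (-l * (t - s))) \<le> 1/2"
    using lam_exists[OF k0 T0] by blast
  define cl where "cl t = max 0 (min T t)" for t :: real
  have clT: "cl t \<in> {0..T}" for t using T0 by (auto simp: cl_def)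
  have clc: "continuous_on UNIV cl" unfolding cl_def by (intro continuous_intros)
  have cl_id: "t \<in> {0..T} \<Longrightarrow> cl t = t" for t by (auto simp: cl_def)
  define S where "S = PiC UNIV (\<lambda>_::real. H0)"
  have inS: "u \<in> S \<longleftrightarrow> (\<forall>t. apply_bcontfun u t \<in> H0)" for u
    unfolding S_def mem_PiC_iff by auto
  define V where "V u s = exp (l * s) *\<^sub>R apply_bcontfun u s" for u :: "real \<Rightarrow>\<^sub>C 'a" and s
  have Vc: "continuous_on {0..T} (V u)" for u unfolding V_def by (intro continuous_intros) auto
  have VH: "u \<in> S \<Longrightarrow> V u ` {0..T} \<subseteq> H0" for u
    unfolding V_def using inS sub by (auto simp: subspace_scale)
  define h where "h u \<tau> = f \<tau> + conv \<tau> (\<lambda>s. F s (V u s))" for u \<tau>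
  have FVc: "u \<in> S \<Longrightarrow> continuous_on {0..T} (\<lambda>s. F s (V u s))" for u by (rule Fcont[OF Vc VH])
  have hc: "u \<in> S \<Longrightarrow> continuous_on {0..T} (h u)" for u
    unfolding h_def by (intro continuous_intros f conv_cont[OF T0 FVc])
  have hH: "u \<in> S \<Longrightarrow> \<tau> \<in> {0..T} \<Longrightarrow> h u \<tau> \<in> H0" for u \<tau>
  proof -
    assume u: "u \<in> S" and \<tau>: "\<tau> \<in> {0..T}"
    have "conv \<tau> (\<lambda>s. F s (V u s)) \<in> H0"
      by (rule conv_H0) (use \<tau> continuous_on_subset[OF FVc[OF u]] in auto)
    moreover have "f \<tau> \<in> H0" using fH \<tau> by auto
    ultimately show ?thesis unfolding h_def using sub by (simp add: subspace_add)
  qed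
  define \<Psi>0 where "\<Psi>0 u t = exp (-l * cl t) *\<^sub>R h u (cl t)" for u t
  define \<Psi> where "\<Psi> u = Bcontfun (\<Psi>0 u)" for u
  have \<Psi>0_bc: "u \<in> S \<Longrightarrow> \<Psi>0 u \<in> bcontfun" for u
  proof -
    assume u: "u \<in> S"
    have c1: "continuous_on {0..T} (\<lambda>\<tau>. exp (-l * \<tau>) *\<^sub>R h u \<tau>)"
      by (intro continuous_intros hc[OF u])
    have "continuous_on UNIV (\<Psi>0 u)"
      unfolding \<Psi>0_def by (rule continuous_on_compose2[OF c1 clc]) (use clT in auto)
    moreover have "bounded (range (\<Psi>0 u))"
    proof -
      have "bounded ((\<lambda>\<tau>. exp (-l * \<tau>) *\<^sub>R h u \<tau>) ` {0..T})"
        by (rule compact_imp_bounded[OF compact_continuous_image[OF c1 compact_Icc]])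
      moreover have "range (\<Psi>0 u) \<subseteq> (\<lambda>\<tau>. exp (-l * \<tau>) *\<^sub>R h u \<tau>) ` {0..T}"
        unfolding \<Psi>0_def using clT by auto
      ultimately show ?thesis by (rule bounded_subset)
    qed
    ultimately show ?thesis by (simp add: bcontfun_def)
  qed
  have \<Psi>_ap: "u \<in> S \<Longrightarrow> apply_bcontfun (\<Psi> u) = \<Psi>0 u" for u
    unfolding \<Psi>_def by (rule Bcontfun_inverse[OF \<Psi>0_bc])
  have \<Psi>S: "\<Psi> ` S \<subseteq> S"
  proof
    fix y assume "y \<in> \<Psi> ` S"
    then obtain u where u: "u \<in> S" and y: "y = \<Psi> u" by blast
    have "\<Psi>0 u t \<in> H0" for t unfolding \<Psi>0_def using hH[OF u clT] sub by (simp add: subspace_scale)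
    then show "y \<in> S" unfolding y inS \<Psi>_ap[OF u] by blast
  qed
  have contr: "dist (\<Psi> u1) (\<Psi> u2) \<le> 1/2 * dist u1 u2" if u1: "u1 \<in> S" and u2: "u2 \<in> S" for u1 u2
  proof (rule dist_bound)
    fix t
    define \<tau> where "\<tau> = cl t"
    have \<tau>T: "\<tau> \<in> {0..T}" unfolding \<tau>_def by (rule clT)
    then have \<tau>0: "0 \<le> \<tau>" by simp
    have sub\<tau>: "{0..\<tau>} \<subseteq> {0..T}" using \<tau>T by auto
    have c1: "continuous_on {0..\<tau>} (\<lambda>s. F s (V u1 s))" using FVc[OF u1] sub\<tau> by (rule continuous_on_subset)
    have c2: "continuous_on {0..\<tau>} (\<lambda>s. F s (V u2 s))" using FVc[OF u2] sub\<tau> by (rule continuous_on_subset)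
    define d where "d = dist u1 u2"
    have "\<Psi>0 u1 t - \<Psi>0 u2 t = exp (-l * \<tau>) *\<^sub>R (conv \<tau> (\<lambda>s. F s (V u1 s)) - conv \<tau> (\<lambda>s. F s (V u2 s)))"
      unfolding \<Psi>0_def h_def \<tau>_def by (simp add: algebra_simps)
    also have "\<dots> = exp (-l * \<tau>) *\<^sub>R conv \<tau> (\<lambda>s. F s (V u1 s) - F s (V u2 s))"
      by (simp add: conv_diff[OF \<tau>0 c1 c2])
    finally have eq: "norm (\<Psi>0 u1 t - \<Psi>0 u2 t) = exp (-l * \<tau>) * norm (conv \<tau> (\<lambda>s. F s (V u1 s) - F s (V u2 s)))"
      by simp
    have "norm (conv \<tau> (\<lambda>s. F s (V u1 s) - F s (V u2 s))) \<le> C * 0 * (\<tau> powr (1 - \<beta>) / (1 - \<beta>))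
           + C * L * (LINT s:{0..\<tau>}|lborel. (\<tau> - s) powr (-\<beta>) * (exp (l * s) * d))"
    proof (rule conv_est[OF \<tau>0])
      show "continuous_on {0..\<tau>} (\<lambda>s. F s (V u1 s) - F s (V u2 s))" by (intro continuous_intros c1 c2)
      show "continuous_on {0..\<tau>} (\<lambda>s. exp (l * s) * d)" by (intro continuous_intros)
      fix s assume s: "s \<in> {0..\<tau>}"
      then have sT: "s \<in> {0..T}" using sub\<tau> by auto
      have "norm (F s (V u1 s) - F s (V u2 s)) \<le> L * norm (V u1 s - V u2 s)"
        using Flip[OF sT] VH[OF u1] VH[OF u2] sT by (auto simp: image_subset_iff)
      also have "norm (V u1 s - V u2 s) = exp (l * s) * norm (apply_bcontfun u1 s - apply_bcontfun u2 s)"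
        unfolding V_def by (simp flip: scaleR_diff_right)
      also have "norm (apply_bcontfun u1 s - apply_bcontfun u2 s) \<le> d"
        using dist_bounded[of u1 s u2] by (simp add: d_def dist_norm)
      finally show "norm (F s (V u1 s) - F s (V u2 s)) \<le> 0 + L * (exp (l * s) * d)"
        using L0 by (simp add: mult_left_mono)
    qed
    also have "\<dots> = (C * L) * (LINT s:{0..\<tau>}|lborel. (\<tau> - s) powr (-\<beta>) * exp (-l * (\<tau> - s))) * (d * exp (l * \<tau>))"
      unfolding int_exp_shift by (simp only: mult_zero_right mult_zero_left add_0_left mult_ac)
    also have "\<dots> \<le> 1/2 * (d * exp (l * \<tau>))"
      using lk[OF \<tau>T] by (intro mult_right_mono) (auto simp: d_def)
    finally have "exp (-l * \<tau>) * norm (conv \<tau> (\<lambda>s. F s (V u1 s) - F s (V u2 s))) \<le> exp (-l * \<tau>) * (1/2 * (d * exp (l * \<tau>)))"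
      by (intro mult_left_mono) auto
    also have "\<dots> = 1/2 * d * (exp (-l * \<tau>) * exp (l * \<tau>))" by (simp add: mult_ac)
    also have "exp (-l * \<tau>) * exp (l * \<tau>) = 1" by (simp add: exp_minus_inverse[of "l * \<tau>", symmetric] mult.commute)
    finally show "dist (\<Psi> u1 t) (\<Psi> u2 t) \<le> 1/2 * dist u1 u2"
      using eq by (simp add: dist_norm \<Psi>_ap[OF u1] \<Psi>_ap[OF u2] d_def)
  qed
  have Sne: "S \<noteq> {}"
  proof -
    have "(0 :: real \<Rightarrow>\<^sub>C 'a) \<in> S" unfolding inS using sub subspace_0 by auto
    then show ?thesis by blast
  qed
  have Scomp: "complete S"
    unfolding complete_eq_closed S_def by (rule closed_PiC) (use cl in auto)
  obtain u where uS: "u \<in> S" and ufix: "\<Psi> u = u"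
    using Banach_fix[OF Scomp Sne _ _ \<Psi>S contr] by auto
  show ?thesis
  proof (intro exI conjI ballI)
    show "continuous_on {0..T} (V u)" by (rule Vc)
    show "V u ` {0..T} \<subseteq> H0" by (rule VH[OF uS])
    fix t assume t: "t \<in> {0..T}"
    have "apply_bcontfun u t = \<Psi>0 u t" using \<Psi>_ap[OF uS] ufix by metis
    also have "\<dots> = exp (-l * t) *\<^sub>R h u t" unfolding \<Psi>0_def cl_id[OF t] ..
    finally have "V u t = exp (l * t) *\<^sub>R (exp (-l * t) *\<^sub>R h u t)" by (simp add: V_def)
    also have "\<dots> = (exp (l * t) * exp (-l * t)) *\<^sub>R h u t" by simp
    also have "exp (l * t) * exp (-l * t) = 1" by (simp add: exp_minus_inverse[of "l * t", symmetric])
    finally show "V u t = f t + conv t (\<lambda>s. F s (V u s))" by (simp add: h_def)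
  qed
qed

end

context vsetup
begin

lemma volterra_global_unique:
  assumes Flip: "\<And>T. 0 \<le> T \<Longrightarrow> \<exists>L\<ge>0. \<forall>s\<in>{0..T}. \<forall>x\<in>H0. \<forall>y\<in>H0. norm (F s x - F s y) \<le> L * norm (x - y)"
    and Fcont: "\<And>T v. 0 \<le> T \<Longrightarrow> continuous_on {0..T} v \<Longrightarrow> v ` {0..T} \<subseteq> H0 \<Longrightarrow> continuous_on {0..T} (\<lambda>s. F s (v s))"
    and v1: "continuous_on {0..} v1" "v1 ` {0..} \<subseteq> H0" "\<And>t. 0 \<le> t \<Longrightarrow> v1 t = f t + conv t (\<lambda>s. F s (v1 s))"
    and v2: "continuous_on {0..} v2" "v2 ` {0..} \<subseteq> H0" "\<And>t. 0 \<le> t \<Longrightarrow> v2 t = f t + conv t (\<lambda>s. F s (v2 s))"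
    and t: "0 \<le> t"
  shows "v1 t = v2 t"
proof -
  obtain L where L0: "L \<ge> 0" and L: "\<forall>s\<in>{0..t}. \<forall>x\<in>H0. \<forall>y\<in>H0. norm (F s x - F s y) \<le> L * norm (x - y)"
    using Flip[OF t] by blast
  have sub: "{0..t} \<subseteq> {0..}" by auto
  have c1: "continuous_on {0..t} v1" using v1(1) sub by (rule continuous_on_subset)
  have c2: "continuous_on {0..t} v2" using v2(1) sub by (rule continuous_on_subset)
  have i1: "v1 ` {0..t} \<subseteq> H0" using v1(2) sub by blast
  have i2: "v2 ` {0..t} \<subseteq> H0" using v2(2) sub by blast
  show ?thesis
  proof (rule volterra_unique[OF t L0 _ c1 i1 Fcont[OF t c1 i1] c2 i2 Fcont[OF t c2 i2]])
    show "\<And>s x y. s \<in> {0..t} \<Longrightarrow> x \<in> H0 \<Longrightarrow> y \<in> H0 \<Longrightarrow> norm (F s x - F s y) \<le> L * norm (x - y)"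
      using L by blast
    show "\<And>s. s \<in> {0..t} \<Longrightarrow> v1 s = f s + conv s (\<lambda>s. F s (v1 s))" using v1(3) by auto
    show "\<And>s. s \<in> {0..t} \<Longrightarrow> v2 s = f s + conv s (\<lambda>s. F s (v2 s))" using v2(3) by auto
    show "t \<in> {0..t}" using t by simp
  qed
qed

lemma volterra_global:
  assumes Flip: "\<And>T. 0 \<le> T \<Longrightarrow> \<exists>L\<ge>0. \<forall>s\<in>{0..T}. \<forall>x\<in>H0. \<forall>y\<in>H0. norm (F s x - F s y) \<le> L * norm (x - y)"
    and Fcont: "\<And>T v. 0 \<le> T \<Longrightarrow> continuous_on {0..T} v \<Longrightarrow> v ` {0..T} \<subseteq> H0 \<Longrightarrow> continuous_on {0..T} (\<lambda>s. F s (v s))"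
    and f: "continuous_on {0..} f" and fH: "f ` {0..} \<subseteq> H0"
  shows "\<exists>V. continuous_on {0..} V \<and> V ` {0..} \<subseteq> H0 \<and> (\<forall>t\<ge>0. V t = f t + conv t (\<lambda>s. F s (V s)))"
proof -
  have ex: "\<exists>v. continuous_on {0..real n} v \<and> v ` {0..real n} \<subseteq> H0 \<and> (\<forall>t\<in>{0..real n}. v t = f t + conv t (\<lambda>s. F s (v s)))" for n :: nat
  proof -
    have T0: "0 \<le> real n" by simp
    obtain L where L0: "L \<ge> 0" and L: "\<forall>s\<in>{0..real n}. \<forall>x\<in>H0. \<forall>y\<in>H0. norm (F s x - F s y) \<le> L * norm (x - y)"
      using Flip[OF T0] by blast
    show ?thesis
    proof (rule volterra_exists[OF T0 L0])
      show "\<And>s x y. s \<in> {0..real n} \<Longrightarrow> x \<in> H0 \<Longrightarrow> y \<in> H0 \<Longrightarrow> norm (F s x - F s y) \<le> L * norm (x - y)"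
        using L by blast
      show "continuous_on {0..real n} f" using f by (rule continuous_on_subset) auto
      show "f ` {0..real n} \<subseteq> H0" using fH by auto
      show "\<And>v. continuous_on {0..real n} v \<Longrightarrow> v ` {0..real n} \<subseteq> H0 \<Longrightarrow> continuous_on {0..real n} (\<lambda>s. F s (v s))"
        by (rule Fcont[OF T0])
    qed
  qed
  then obtain v where vc: "\<And>n. continuous_on {0..real n} (v n)" and vH: "\<And>n. v n ` {0..real n} \<subseteq> H0"
    and ve: "\<And>n t. t \<in> {0..real n} \<Longrightarrow> v n t = f t + conv t (\<lambda>s. F s (v n s))"
    by metis
  have agree: "v n t = v m t" if "t \<in> {0..real n}" "real n \<le> real m" for n m t
  proof -
    have T0: "0 \<le> real n" by simp
    obtain L where L0: "L \<ge> 0" and L: "\<forall>s\<in>{0..real n}. \<forall>x\<in>H0. \<forall>y\<in>H0. norm (F s x - F s y) \<le> L * norm (x - y)"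
      using Flip[OF T0] by blast
    have sub: "{0..real n} \<subseteq> {0..real m}" using that by auto
    have c2: "continuous_on {0..real n} (v m)" using vc[of m] sub by (rule continuous_on_subset)
    have i2: "v m ` {0..real n} \<subseteq> H0" using vH[of m] sub by blast
    show ?thesis
    proof (rule volterra_unique[OF T0 L0 _ vc[of n] vH[of n] Fcont[OF T0 vc[of n] vH[of n]] c2 i2 Fcont[OF T0 c2 i2]])
      show "\<And>s x y. s \<in> {0..real n} \<Longrightarrow> x \<in> H0 \<Longrightarrow> y \<in> H0 \<Longrightarrow> norm (F s x - F s y) \<le> L * norm (x - y)"
        using L by blast
      show "\<And>s. s \<in> {0..real n} \<Longrightarrow> v n s = f s + conv s (\<lambda>s. F s (v n s))" using ve by blast
      show "\<And>s. s \<in> {0..real n} \<Longrightarrow> v m s = f s + conv s (\<lambda>s. F s (v m s))" using ve sub by blast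
    qed (use that in auto)
  qed
  define V where "V t = v (nat \<lceil>t\<rceil>) t" for t
  have Vv: "V t = v n t" if tn0: "t \<in> {0..real n}" for n t
  proof -
    have "t \<le> real (nat \<lceil>t\<rceil>)" using that by linarith
    then have "t \<in> {0..real (nat \<lceil>t\<rceil>)}" using that by auto
    moreover have "real (nat \<lceil>t\<rceil>) \<le> real n"
    proof -
      have "t \<le> real n" using tn0 by simp
      then have "nat \<lceil>t\<rceil> \<le> n" by simp
      then show ?thesis by simp
    qed
    ultimately show ?thesis unfolding V_def by (rule agree)
  qed
  have Vc_n: "continuous_on {0..real n} V" for n
    using vc[of n] by (rule continuous_on_cong[THEN iffD1, rotated 2]) (use Vv in auto)
  show ?thesis
  proof (intro exI conjI allI impI)
    show "continuous_on {0..} V"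
      unfolding continuous_on_eq_continuous_within
    proof
      fix t :: real assume t: "t \<in> {0..}"
      define n where "n = nat \<lceil>t\<rceil> + 1"
      have tn: "t < real n" unfolding n_def by linarith
      have "continuous (at t within {0..real n}) V"
        using Vc_n[of n] t tn unfolding continuous_on_eq_continuous_within by auto
      moreover have "at t within {0..} = at t within {0..real n}"
        by (rule at_within_nhd[of _ "{..<real n}"]) (use tn in auto)
      ultimately show "continuous (at t within {0..}) V" by simp
    qed
    show "V ` {0..} \<subseteq> H0"
    proof
      fix y assume "y \<in> V ` {0..}"
      then obtain t where t: "t \<ge> 0" and y: "y = V t" by auto
      have tn: "t \<in> {0..real (nat \<lceil>t\<rceil>)}" using t by (auto simp: of_nat_ceiling)
      show "y \<in> H0" using vH[of "nat \<lceil>t\<rceil>"] tn Vv[OF tn] y by auto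
    qed
    fix t :: real assume t: "0 \<le> t"
    define n where "n = nat \<lceil>t\<rceil>"
    have tn: "t \<in> {0..real n}" using t by (auto simp: n_def of_nat_ceiling)
    have "V t = v n t" by (rule Vv[OF tn])
    also have "\<dots> = f t + conv t (\<lambda>s. F s (v n s))" by (rule ve[OF tn])
    also have "conv t (\<lambda>s. F s (v n s)) = conv t (\<lambda>s. F s (V s))"
    proof (rule conv_cong)
      fix s assume "s \<in> {0..t}"
      then have "s \<in> {0..real n}" using tn by auto
      then show "F s (v n s) = F s (V s)" using Vv by metis
    qed
    finally show "V t = f t + conv t (\<lambda>s. F s (V s))" .
  qed
qed

end

locale msetup = vsetup H0 K C \<beta> for H0 :: "'a::{real_inner,banach,second_countable_topology} set" and K C \<beta> +
  fixes T0 :: "real \<Rightarrow> 'a \<Rightarrow>\<^sub>L 'a" and G :: "'a \<Rightarrow> 'a" and DG :: "'a \<Rightarrow> 'a \<Rightarrow>\<^sub>L 'a"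
    and L :: real and Y :: "real \<Rightarrow> 'a"
  assumes T0_into: "\<And>t x. t \<ge> 0 \<Longrightarrow> x \<in> H0 \<Longrightarrow> T0 t x \<in> H0"
    and T0_cont: "\<And>x. x \<in> H0 \<Longrightarrow> continuous_on {0..} (\<lambda>t. T0 t x)"
    and G_lip: "L-lipschitz_on H0 G"
    and G_deriv: "\<And>x. x \<in> H0 \<Longrightarrow> (G has_derivative blinfun_apply (DG x)) (at x within H0)"
    and DG_cont: "continuous_on H0 DG"
    and Y_cont: "continuous_on UNIV Y" and Y_into: "\<And>t. Y t \<in> H0"
begin

lemma L0: "0 \<le> L" using G_lip by (rule lipschitz_on_nonneg)

lemma G_cont: "continuous_on H0 G" using G_lip by (rule lipschitz_on_continuous_on)

lemma G_lipD: "x \<in> H0 \<Longrightarrow> y \<in> H0 \<Longrightarrow> norm (G x - G y) \<le> L * norm (x - y)"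
  using lipschitz_onD[OF G_lip] by (simp add: dist_norm)

lemma nl_Fcont:
  assumes "continuous_on {0..T} v" "v ` {0..T} \<subseteq> H0"
  shows "continuous_on {0..T} (\<lambda>s. G (v s + Y s))"
proof (rule continuous_on_compose2[OF G_cont])
  show "continuous_on {0..T} (\<lambda>s. v s + Y s)"
    by (intro continuous_intros assms(1) continuous_on_subset[OF Y_cont]) auto
  show "(\<lambda>s. v s + Y s) ` {0..T} \<subseteq> H0" using assms(2) Y_into sub by (auto simp: subspace_add)
qed

lemma nl_Flip: "\<exists>L\<ge>0. \<forall>s\<in>{0..T}. \<forall>x\<in>H0. \<forall>y\<in>H0. norm (G (x + Y s) - G (y + Y s)) \<le> L * norm (x - y)"
proof (intro exI conjI ballI)
  show "0 \<le> L" by (rule L0)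
  fix s x y assume "x \<in> H0" "y \<in> H0"
  then show "norm (G (x + Y s) - G (y + Y s)) \<le> L * norm (x - y)"
    using G_lipD[of "x + Y s" "y + Y s"] Y_into sub by (simp add: subspace_add)
qed

lemma mild_iff: "mild_sol T0 K G H0 Y \<xi> V \<longleftrightarrow>
   continuous_on {0..} V \<and> V ` {0..} \<subseteq> H0 \<and> (\<forall>t\<ge>0. V t = T0 t (\<xi> - Y 0) + conv t (\<lambda>s. G (V s + Y s)))"
  unfolding mild_sol_def conv_def by simp

lemma mild_exists: "\<xi> \<in> H0 \<Longrightarrow> \<exists>V. mild_sol T0 K G H0 Y \<xi> V"
proof -
  assume \<xi>: "\<xi> \<in> H0"
  have x0: "\<xi> - Y 0 \<in> H0" using \<xi> Y_into sub by (simp add: subspace_diff)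
  have "\<exists>V. continuous_on {0..} V \<and> V ` {0..} \<subseteq> H0 \<and> (\<forall>t\<ge>0. V t = T0 t (\<xi> - Y 0) + conv t (\<lambda>s. G (V s + Y s)))"
  proof (rule volterra_global)
    show "\<And>T. 0 \<le> T \<Longrightarrow> \<exists>L\<ge>0. \<forall>s\<in>{0..T}. \<forall>x\<in>H0. \<forall>y\<in>H0. norm (G (x + Y s) - G (y + Y s)) \<le> L * norm (x - y)"
      by (rule nl_Flip)
    show "\<And>T v. 0 \<le> T \<Longrightarrow> continuous_on {0..T} v \<Longrightarrow> v ` {0..T} \<subseteq> H0 \<Longrightarrow> continuous_on {0..T} (\<lambda>s. G (v s + Y s))"
      by (rule nl_Fcont)
    show "continuous_on {0..} (\<lambda>t. T0 t (\<xi> - Y 0))" by (rule T0_cont[OF x0])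
    show "(\<lambda>t. T0 t (\<xi> - Y 0)) ` {0..} \<subseteq> H0" using T0_into[OF _ x0] by auto
  qed
  then show ?thesis unfolding mild_iff .
qed

lemma mild_unique:
  assumes m1: "mild_sol T0 K G H0 Y \<xi> V1" and m2: "mild_sol T0 K G H0 Y \<xi> V2" and t: "0 \<le> t"
  shows "V1 t = V2 t"
proof -
  have fl: "\<And>T. 0 \<le> T \<Longrightarrow> \<exists>L\<ge>0. \<forall>s\<in>{0..T}. \<forall>x\<in>H0. \<forall>y\<in>H0. norm (G (x + Y s) - G (y + Y s)) \<le> L * norm (x - y)"
    by (rule nl_Flip)
  have fc: "\<And>T v. 0 \<le> T \<Longrightarrow> continuous_on {0..T} v \<Longrightarrow> v ` {0..T} \<subseteq> H0 \<Longrightarrow> continuous_on {0..T} (\<lambda>s. G (v s + Y s))"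
    by (rule nl_Fcont)
  from m1 have a1: "continuous_on {0..} V1" "V1 ` {0..} \<subseteq> H0"
    "\<And>t. 0 \<le> t \<Longrightarrow> V1 t = T0 t (\<xi> - Y 0) + conv t (\<lambda>s. G (V1 s + Y s))"
    unfolding mild_iff by auto
  from m2 have a2: "continuous_on {0..} V2" "V2 ` {0..} \<subseteq> H0"
    "\<And>t. 0 \<le> t \<Longrightarrow> V2 t = T0 t (\<xi> - Y 0) + conv t (\<lambda>s. G (V2 s + Y s))"
    unfolding mild_iff by auto
  show ?thesis
    by (rule volterra_global_unique[where F="\<lambda>s x. G (x + Y s)" and f="\<lambda>t. T0 t (\<xi> - Y 0)",
          OF fl fc a1 a2 t])
qed

lemma cocycle_eq:
  assumes "mild_sol T0 K G H0 Y \<xi> V" "0 \<le> t"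
  shows "cocycle T0 K G H0 Y t \<xi> = V t + Y t"
proof -
  have "(THE x. \<exists>V. mild_sol T0 K G H0 Y \<xi> V \<and> x = V t) = V t"
  proof (rule the_equality)
    show "\<exists>V'. mild_sol T0 K G H0 Y \<xi> V' \<and> V t = V' t" using assms(1) by blast
    fix x assume "\<exists>V'. mild_sol T0 K G H0 Y \<xi> V' \<and> x = V' t"
    then obtain V' where "mild_sol T0 K G H0 Y \<xi> V'" "x = V' t" by blast
    then show "x = V t" using mild_unique[OF _ assms] by metis
  qed
  then show ?thesis unfolding cocycle_def by simp
qed

definition Vs where "Vs \<xi> = (SOME V. mild_sol T0 K G H0 Y \<xi> V)"
definition phi where "phi \<xi> s = cocycle T0 K G H0 Y s \<xi>"

lemma Vs_mild: "\<xi> \<in> H0 \<Longrightarrow> mild_sol T0 K G H0 Y \<xi> (Vs \<xi>)"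
proof -
  assume "\<xi> \<in> H0"
  then obtain V where "mild_sol T0 K G H0 Y \<xi> V" using mild_exists by blast
  then show ?thesis unfolding Vs_def by (rule someI[where P="mild_sol T0 K G H0 Y \<xi>"])
qed

lemma Vs_props:
  assumes "\<xi> \<in> H0"
  shows "continuous_on {0..} (Vs \<xi>)" "Vs \<xi> ` {0..} \<subseteq> H0"
    "\<And>t. 0 \<le> t \<Longrightarrow> Vs \<xi> t = T0 t (\<xi> - Y 0) + conv t (\<lambda>s. G (Vs \<xi> s + Y s))"
  using Vs_mild[OF assms] unfolding mild_iff by auto

lemma phi_eq: "\<xi> \<in> H0 \<Longrightarrow> 0 \<le> s \<Longrightarrow> phi \<xi> s = Vs \<xi> s + Y s"
  unfolding phi_def by (rule cocycle_eq[OF Vs_mild])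

lemma phi_cont: "\<xi> \<in> H0 \<Longrightarrow> continuous_on {0..} (phi \<xi>)"
proof -
  assume \<xi>: "\<xi> \<in> H0"
  have "continuous_on {0..} (\<lambda>s. Vs \<xi> s + Y s)"
    by (intro continuous_intros Vs_props(1)[OF \<xi>] continuous_on_subset[OF Y_cont]) auto
  then show ?thesis by (rule continuous_on_cong[THEN iffD1, rotated 2]) (use phi_eq[OF \<xi>] in auto)
qed

lemma phi_H0: "\<xi> \<in> H0 \<Longrightarrow> 0 \<le> s \<Longrightarrow> phi \<xi> s \<in> H0"
  using phi_eq[of \<xi> s] Vs_props(2)[of \<xi>] Y_into sub by (auto simp: subspace_add)

lemma DGphi_cont: "\<xi> \<in> H0 \<Longrightarrow> continuous_on {0..} (\<lambda>s. DG (phi \<xi> s))"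
  by (rule continuous_on_compose2[OF DG_cont phi_cont]) (use phi_H0 in auto)

lemma DGphi_bound:
  assumes \<xi>: "\<xi> \<in> H0" and T0: "0 \<le> T"
  obtains L' where "L' \<ge> 0" "\<And>s z. s \<in> {0..T} \<Longrightarrow> norm (DG (phi \<xi> s) z) \<le> L' * norm z"
proof -
  have "continuous_on {0..T} (\<lambda>s. DG (phi \<xi> s))"
    using DGphi_cont[OF \<xi>] by (rule continuous_on_subset) auto
  then obtain B where B0: "B \<ge> 0" and B: "\<And>s. s \<in> {0..T} \<Longrightarrow> norm (DG (phi \<xi> s)) \<le> B"
    using bounded_on_Icc by blast
  show ?thesis
  proof (rule that[OF B0])
    fix s z assume s: "s \<in> {0..T}"
    have "norm (DG (phi \<xi> s) z) \<le> norm (DG (phi \<xi> s)) * norm z" by (rule norm_blinfun)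
    also have "\<dots> \<le> B * norm z" using B[OF s] by (intro mult_right_mono) auto
    finally show "norm (DG (phi \<xi> s) z) \<le> B * norm z" .
  qed
qed

lemma lin_Flip:
  assumes \<xi>: "\<xi> \<in> H0" and T0: "0 \<le> T"
  shows "\<exists>L\<ge>0. \<forall>s\<in>{0..T}. \<forall>x\<in>H0. \<forall>y\<in>H0. norm (DG (phi \<xi> s) x - DG (phi \<xi> s) y) \<le> L * norm (x - y)"
proof -
  obtain L' where L'0: "L' \<ge> 0" and L': "\<And>s z. s \<in> {0..T} \<Longrightarrow> norm (DG (phi \<xi> s) z) \<le> L' * norm z"
    using DGphi_bound[OF \<xi> T0] by blast
  show ?thesis
    by (rule exI[of _ L']) (use L'0 L' in \<open>auto simp: blinfun.diff_right[symmetric]\<close>)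
qed

lemma lin_Fcont:
  assumes \<xi>: "\<xi> \<in> H0" and T0: "0 \<le> T" and v: "continuous_on {0..T} v"
  shows "continuous_on {0..T} (\<lambda>s. DG (phi \<xi> s) (v s))"
proof -
  have "continuous_on {0..T} (\<lambda>s. DG (phi \<xi> s))"
    using DGphi_cont[OF \<xi>] by (rule continuous_on_subset) auto
  then show ?thesis using v by (rule blinfun.continuous_on)
qed

definition linsol where
  "linsol \<xi> \<eta> Z \<longleftrightarrow> continuous_on {0..} Z \<and> Z ` {0..} \<subseteq> H0 \<and>
     (\<forall>t\<ge>0. Z t = T0 t \<eta> + conv t (\<lambda>s. DG (phi \<xi> s) (Z s)))"

lemma linsol_exists:
  assumes \<xi>: "\<xi> \<in> H0" and \<eta>: "\<eta> \<in> H0"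
  shows "\<exists>Z. linsol \<xi> \<eta> Z"
proof -
  have fl: "\<And>T. 0 \<le> T \<Longrightarrow> \<exists>L\<ge>0. \<forall>s\<in>{0..T}. \<forall>x\<in>H0. \<forall>y\<in>H0. norm (DG (phi \<xi> s) x - DG (phi \<xi> s) y) \<le> L * norm (x - y)"
    by (rule lin_Flip[OF \<xi>])
  have fc: "\<And>T v. 0 \<le> T \<Longrightarrow> continuous_on {0..T} v \<Longrightarrow> v ` {0..T} \<subseteq> H0 \<Longrightarrow> continuous_on {0..T} (\<lambda>s. DG (phi \<xi> s) (v s))"
    by (rule lin_Fcont[OF \<xi>])
  have "\<exists>Z. continuous_on {0..} Z \<and> Z ` {0..} \<subseteq> H0 \<and> (\<forall>t\<ge>0. Z t = T0 t \<eta> + conv t (\<lambda>s. DG (phi \<xi> s) (Z s)))"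
    by (rule volterra_global[OF fl fc T0_cont[OF \<eta>]]) (use T0_into[OF _ \<eta>] in auto)
  then show ?thesis unfolding linsol_def .
qed

lemma linsol_unique:
  assumes \<xi>: "\<xi> \<in> H0" and m1: "linsol \<xi> \<eta> Z1" and m2: "linsol \<xi> \<eta> Z2" and t: "0 \<le> t"
  shows "Z1 t = Z2 t"
proof -
  have fl: "\<And>T. 0 \<le> T \<Longrightarrow> \<exists>L\<ge>0. \<forall>s\<in>{0..T}. \<forall>x\<in>H0. \<forall>y\<in>H0. norm (DG (phi \<xi> s) x - DG (phi \<xi> s) y) \<le> L * norm (x - y)"
    by (rule lin_Flip[OF \<xi>])
  have fc: "\<And>T v. 0 \<le> T \<Longrightarrow> continuous_on {0..T} v \<Longrightarrow> v ` {0..T} \<subseteq> H0 \<Longrightarrow> continuous_on {0..T} (\<lambda>s. DG (phi \<xi> s) (v s))"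
    by (rule lin_Fcont[OF \<xi>])
  from m1 have a1: "continuous_on {0..} Z1" "Z1 ` {0..} \<subseteq> H0"
    "\<And>t. 0 \<le> t \<Longrightarrow> Z1 t = T0 t \<eta> + conv t (\<lambda>s. DG (phi \<xi> s) (Z1 s))"
    unfolding linsol_def by auto
  from m2 have a2: "continuous_on {0..} Z2" "Z2 ` {0..} \<subseteq> H0"
    "\<And>t. 0 \<le> t \<Longrightarrow> Z2 t = T0 t \<eta> + conv t (\<lambda>s. DG (phi \<xi> s) (Z2 s))"
    unfolding linsol_def by auto
  show ?thesis
    by (rule volterra_global_unique[where F="\<lambda>s x. DG (phi \<xi> s) x" and f="\<lambda>t. T0 t \<eta>",
          OF fl fc a1 a2 t])
qed

definition Zs where "Zs \<xi> \<eta> = (SOME Z. linsol \<xi> \<eta> Z)"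

lemma Zs_sol: "\<xi> \<in> H0 \<Longrightarrow> \<eta> \<in> H0 \<Longrightarrow> linsol \<xi> \<eta> (Zs \<xi> \<eta>)"
proof -
  assume "\<xi> \<in> H0" "\<eta> \<in> H0"
  then obtain Z where "linsol \<xi> \<eta> Z" using linsol_exists by blast
  then show ?thesis unfolding Zs_def by (rule someI[where P="linsol \<xi> \<eta>"])
qed

lemma Zs_props:
  assumes "\<xi> \<in> H0" "\<eta> \<in> H0"
  shows "continuous_on {0..} (Zs \<xi> \<eta>)" "Zs \<xi> \<eta> ` {0..} \<subseteq> H0"
    "\<And>t. 0 \<le> t \<Longrightarrow> Zs \<xi> \<eta> t = T0 t \<eta> + conv t (\<lambda>s. DG (phi \<xi> s) (Zs \<xi> \<eta> s))"
  using Zs_sol[OF assms] unfolding linsol_def by auto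

lemma Zs_lin:
  assumes \<xi>: "\<xi> \<in> H0" and e1: "\<eta>1 \<in> H0" and e2: "\<eta>2 \<in> H0" and t: "0 \<le> t"
  shows "Zs \<xi> (a *\<^sub>R \<eta>1 + b *\<^sub>R \<eta>2) t = a *\<^sub>R Zs \<xi> \<eta>1 t + b *\<^sub>R Zs \<xi> \<eta>2 t"
proof -
  let ?Z = "\<lambda>t. a *\<^sub>R Zs \<xi> \<eta>1 t + b *\<^sub>R Zs \<xi> \<eta>2 t"
  have e: "a *\<^sub>R \<eta>1 + b *\<^sub>R \<eta>2 \<in> H0" using e1 e2 sub by (simp add: subspace_add subspace_scale)
  have "linsol \<xi> (a *\<^sub>R \<eta>1 + b *\<^sub>R \<eta>2) ?Z"
    unfolding linsol_def
  proof (intro conjI allI impI)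
    show "continuous_on {0..} ?Z" by (intro continuous_intros Zs_props(1)[OF \<xi> e1] Zs_props(1)[OF \<xi> e2])
    show "?Z ` {0..} \<subseteq> H0" using Zs_props(2)[OF \<xi> e1] Zs_props(2)[OF \<xi> e2] sub
      by (auto simp: subspace_add subspace_scale image_subset_iff)
    fix t :: real assume t: "0 \<le> t"
    have c1: "continuous_on {0..t} (Zs \<xi> \<eta>1)" using Zs_props(1)[OF \<xi> e1] by (rule continuous_on_subset) auto
    have c2: "continuous_on {0..t} (Zs \<xi> \<eta>2)" using Zs_props(1)[OF \<xi> e2] by (rule continuous_on_subset) auto
    have d1: "continuous_on {0..t} (\<lambda>s. a *\<^sub>R DG (phi \<xi> s) (Zs \<xi> \<eta>1 s))"
      by (intro continuous_intros lin_Fcont[OF \<xi> t c1])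
    have d2: "continuous_on {0..t} (\<lambda>s. b *\<^sub>R DG (phi \<xi> s) (Zs \<xi> \<eta>2 s))"
      by (intro continuous_intros lin_Fcont[OF \<xi> t c2])
    have "conv t (\<lambda>s. DG (phi \<xi> s) (?Z s)) = conv t (\<lambda>s. a *\<^sub>R DG (phi \<xi> s) (Zs \<xi> \<eta>1 s) + b *\<^sub>R DG (phi \<xi> s) (Zs \<xi> \<eta>2 s))"
      by (simp add: blinfun.add_right blinfun.scaleR_right)
    also have "\<dots> = a *\<^sub>R conv t (\<lambda>s. DG (phi \<xi> s) (Zs \<xi> \<eta>1 s)) + b *\<^sub>R conv t (\<lambda>s. DG (phi \<xi> s) (Zs \<xi> \<eta>2 s))"
      by (simp add: conv_add[OF t d1 d2] conv_scale)
    finally show "?Z t = T0 t (a *\<^sub>R \<eta>1 + b *\<^sub>R \<eta>2) + conv t (\<lambda>s. DG (phi \<xi> s) (?Z s))"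
      using Zs_props(3)[OF \<xi> e1 t] Zs_props(3)[OF \<xi> e2 t]
      by (simp add: blinfun.add_right blinfun.scaleR_right algebra_simps)
  qed
  then show ?thesis using linsol_unique[OF \<xi> Zs_sol[OF \<xi> e] _ t] by metis
qed

lemma T0_ubp:
  assumes T0: "0 \<le> T"
  obtains B where "B \<ge> 0" "\<And>s x. s \<in> {0..T} \<Longrightarrow> x \<in> H0 \<Longrightarrow> norm (T0 s x) \<le> B * norm x"
proof -
  have "\<exists>B. \<forall>i\<in>{0..T}. \<forall>x\<in>H0. norm (T0 i x) \<le> B * norm x"
  proof (rule ubp[OF cl sub])
    fix x assume x: "x \<in> H0"
    have "continuous_on {0..T} (\<lambda>t. T0 t x)" using T0_cont[OF x] by (rule continuous_on_subset) auto
    then obtain B where "\<And>s. s \<in> {0..T} \<Longrightarrow> norm (T0 s x) \<le> B" using bounded_on_Icc by metis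
    then show "\<exists>B. \<forall>i\<in>{0..T}. norm (T0 i x) \<le> B" by blast
  qed
  then obtain B where B: "\<forall>i\<in>{0..T}. \<forall>x\<in>H0. norm (T0 i x) \<le> B * norm x" by blast
  show ?thesis
  proof (rule that[of "max B 0"])
    fix s x assume "s \<in> {0..T}" "x \<in> H0"
    then have "norm (T0 s x) \<le> B * norm x" using B by blast
    also have "\<dots> \<le> max B 0 * norm x" by (intro mult_right_mono) auto
    finally show "norm (T0 s x) \<le> max B 0 * norm x" .
  qed simp
qed

lemma Zs_bound:
  assumes \<xi>: "\<xi> \<in> H0" and T0: "0 \<le> T"
  obtains c where "c \<ge> 0" "\<And>\<eta> s. \<eta> \<in> H0 \<Longrightarrow> s \<in> {0..T} \<Longrightarrow> norm (Zs \<xi> \<eta> s) \<le> c * norm \<eta>"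
proof -
  obtain B0 where B00: "B0 \<ge> 0" and B0: "\<And>s x. s \<in> {0..T} \<Longrightarrow> x \<in> H0 \<Longrightarrow> norm (T0 s x) \<le> B0 * norm x"
    using T0_ubp[OF T0] by blast
  obtain L' where L'0: "L' \<ge> 0" and L': "\<And>s z. s \<in> {0..T} \<Longrightarrow> norm (DG (phi \<xi> s) z) \<le> L' * norm z"
    using DGphi_bound[OF \<xi> T0] by blast
  have k0: "0 \<le> C * L'" using C0 L'0 by simp
  obtain c where c0: "c \<ge> 0" and gr: "\<And>w a t. continuous_on {0..T} w \<Longrightarrow> 0 \<le> a \<Longrightarrow>
     (\<And>t. t \<in> {0..T} \<Longrightarrow> w t \<le> a + (C * L') * (LINT s:{0..t}|lborel. (t - s) powr (-\<beta>) * w s)) \<Longrightarrow>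
     t \<in> {0..T} \<Longrightarrow> w t \<le> c * a"
    using gronwall[OF T0 k0] by blast
  show ?thesis
  proof (rule that[of "c * B0"])
    show "0 \<le> c * B0" using c0 B00 by simp
    fix \<eta> s assume \<eta>: "\<eta> \<in> H0" and s: "s \<in> {0..T}"
    let ?w = "\<lambda>t. norm (Zs \<xi> \<eta> t)"
    have wc: "continuous_on {0..T} ?w"
      by (intro continuous_intros continuous_on_subset[OF Zs_props(1)[OF \<xi> \<eta>]]) auto
    have "?w s \<le> c * (B0 * norm \<eta>)"
    proof (rule gr[OF wc _ _ s])
      show "0 \<le> B0 * norm \<eta>" using B00 by simp
      fix t assume t: "t \<in> {0..T}"
      then have t0: "0 \<le> t" by simp
      have subt: "{0..t} \<subseteq> {0..T}" using t by auto
      have ct: "continuous_on {0..t} (Zs \<xi> \<eta>)" using Zs_props(1)[OF \<xi> \<eta>] by (rule continuous_on_subset) (use t0 in auto)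
      have "norm (conv t (\<lambda>s. DG (phi \<xi> s) (Zs \<xi> \<eta> s))) \<le> C * 0 * (t powr (1 - \<beta>) / (1 - \<beta>))
           + C * L' * (LINT s:{0..t}|lborel. (t - s) powr (-\<beta>) * ?w s)"
      proof (rule conv_est[OF t0 lin_Fcont[OF \<xi> t0 ct]])
        show "continuous_on {0..t} ?w" using wc subt by (rule continuous_on_subset)
        fix r assume "r \<in> {0..t}"
        then have "r \<in> {0..T}" using subt by auto
        then show "norm (DG (phi \<xi> r) (Zs \<xi> \<eta> r)) \<le> 0 + L' * ?w r" using L' by simp
      qed
      moreover have "norm (Zs \<xi> \<eta> t) \<le> norm (T0 t \<eta>) + norm (conv t (\<lambda>s. DG (phi \<xi> s) (Zs \<xi> \<eta> s)))"
        using Zs_props(3)[OF \<xi> \<eta> t0] norm_triangle_ineq by metis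
      moreover have "norm (T0 t \<eta>) \<le> B0 * norm \<eta>" by (rule B0[OF t \<eta>])
      ultimately show "?w t \<le> B0 * norm \<eta> + C * L' * (LINT s:{0..t}|lborel. (t - s) powr (-\<beta>) * ?w s)"
        by simp
    qed
    then show "norm (Zs \<xi> \<eta> s) \<le> c * B0 * norm \<eta>" by (simp add: mult_ac)
  qed
qed

end

context msetup
begin

lemma unif_lin:
  assumes Pc: "compact P" and PH: "P \<subseteq> H0" and e: "\<epsilon> > 0"
  obtains \<delta> where "\<delta> > 0" "\<And>p w. p \<in> P \<Longrightarrow> w \<in> H0 \<Longrightarrow> norm w < \<delta> \<Longrightarrow> norm (G (p + w) - G p - DG p w) \<le> \<epsilon> * norm w"
proof -
  have "\<forall>p\<in>P. \<exists>d>0. \<forall>y\<in>H0. dist y p < d \<longrightarrow> dist (DG y) (DG p) < \<epsilon>/2"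
  proof
    fix p assume "p \<in> P"
    then have "p \<in> H0" using PH by blast
    then show "\<exists>d>0. \<forall>y\<in>H0. dist y p < d \<longrightarrow> dist (DG y) (DG p) < \<epsilon>/2"
    proof -
      have "\<forall>x\<in>H0. \<forall>\<epsilon>>0. \<exists>\<delta>>0. \<forall>x'\<in>H0. dist x' x < \<delta> \<longrightarrow> dist (DG x') (DG x) < \<epsilon>"
        using DG_cont unfolding continuous_on_iff .
      moreover have "\<epsilon>/2 > 0" using e by simp
      ultimately show ?thesis using \<open>p \<in> H0\<close> by blast
    qed
  qed
  then obtain dd where dd0: "\<And>p. p \<in> P \<Longrightarrow> dd p > 0"
    and dd: "\<And>p y. p \<in> P \<Longrightarrow> y \<in> H0 \<Longrightarrow> dist y p < dd p \<Longrightarrow> dist (DG y) (DG p) < \<epsilon>/2"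
    by metis
  have cov: "P \<subseteq> \<Union>((\<lambda>p. ball p (dd p)) ` P)"
  proof
    fix p assume "p \<in> P"
    then have "p \<in> ball p (dd p)" using dd0 by simp
    then show "p \<in> \<Union>((\<lambda>p. ball p (dd p)) ` P)" using \<open>p \<in> P\<close> by blast
  qed
  obtain r where r0: "0 < r" and r: "\<And>x. x \<in> P \<Longrightarrow> \<exists>B \<in> (\<lambda>p. ball p (dd p)) ` P. ball x r \<subseteq> B"
    using Heine_Borel_lemma[OF Pc cov] by auto
  show ?thesis
  proof (rule that[OF r0])
    fix p w assume p: "p \<in> P" and w: "w \<in> H0" and wr: "norm w < r"
    have pH: "p \<in> H0" using p PH by blast
    obtain q where q: "q \<in> P" and bq: "ball p r \<subseteq> ball q (dd q)" using r[OF p] by blast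
    have key: "norm (DG y - DG p) \<le> \<epsilon>" if y: "y \<in> H0" "dist y p < r" for y
    proof -
      have "y \<in> ball q (dd q)" using bq y(2) by (auto simp: dist_commute)
      then have a: "dist (DG y) (DG q) < \<epsilon>/2" using dd[OF q y(1)] by (simp add: dist_commute)
      have "p \<in> ball p r" using r0 by simp
      then have "p \<in> ball q (dd q)" using bq by (rule subsetD[rotated])
      then have b: "dist (DG p) (DG q) < \<epsilon>/2" using dd[OF q pH] by (simp add: dist_commute)
      have "dist (DG y) (DG p) \<le> dist (DG y) (DG q) + dist (DG p) (DG q)" by (rule dist_triangle2)
      then show ?thesis using a b by (simp add: dist_norm)
    qed
    define S where "S = closed_segment p (p + w)"
    have pwH: "p + w \<in> H0" using pH w sub by (simp add: subspace_add)
    have SH: "S \<subseteq> H0" unfolding S_def by (rule closed_segment_subset[OF pH pwH subspace_imp_convex[OF sub]])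
    have Sdist: "dist y p \<le> norm w" if "y \<in> S" for y
    proof -
      have "\<exists>u. 0 \<le> u \<and> u \<le> 1 \<and> y = (1 - u) *\<^sub>R p + u *\<^sub>R (p + w)"
        using that unfolding S_def by (simp only: in_segment(1))
      then obtain u where u: "0 \<le> u" "u \<le> 1" "y = (1 - u) *\<^sub>R p + u *\<^sub>R (p + w)"
        by (elim exE conjE) simp
      have "y - p = u *\<^sub>R w" using u(3) by (simp add: algebra_simps)
      then have "dist y p = u * norm w" using u(1) by (simp add: dist_norm)
      also have "\<dots> \<le> norm w" using u(1,2) mult_left_le_one_le[of "norm w" u] by simp
      finally show ?thesis .
    qed
    have "norm (G (p + w) - G p - blinfun_apply (DG p) ((p + w) - p)) \<le> norm ((p + w) - p) * \<epsilon>"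
    proof (rule differentiable_bound_linearization[where S=S and f'="\<lambda>y. blinfun_apply (DG y)"])
      fix u :: real assume "u \<in> {0..1}"
      then show "p + u *\<^sub>R (p + w - p) \<in> S"
        unfolding S_def in_segment(1) by (intro exI[of _ u]) (auto simp: algebra_simps)
    next
      fix y assume "y \<in> S"
      then have "y \<in> H0" using SH by blast
      then show "(G has_derivative blinfun_apply (DG y)) (at y within S)"
        by (rule has_derivative_subset[OF G_deriv SH])
    next
      fix y assume yS: "y \<in> S"
      have "blinfun_apply (DG y) - blinfun_apply (DG p) = blinfun_apply (DG y - DG p)"
        by (simp add: fun_eq_iff blinfun.diff_left)
      then have "onorm (blinfun_apply (DG y) - blinfun_apply (DG p)) = norm (DG y - DG p)"
        by (simp add: norm_blinfun.rep_eq)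
      also have "\<dots> \<le> \<epsilon>"
        using key[of y] yS SH Sdist[OF yS] wr by auto
      finally show "onorm (blinfun_apply (DG y) - blinfun_apply (DG p)) \<le> \<epsilon>" .
    next
      show "p \<in> S" unfolding S_def by simp
    qed
    then show "norm (G (p + w) - G p - DG p w) \<le> \<epsilon> * norm w" by (simp add: mult.commute)
  qed
qed

end

context msetup
begin

lemma deriv_main:
  assumes \<xi>: "\<xi> \<in> H0" and tpos: "t > 0"
  shows "((\<lambda>\<zeta>. cocycle T0 K G H0 Y t \<zeta>) has_derivative (\<lambda>\<eta>. Zs \<xi> (proj H0 \<eta>) t)) (at \<xi> within H0)"
proof -
  have t0: "0 \<le> t" using tpos by simp
  obtain B0 where B00: "B0 \<ge> 0" and B0: "\<And>s x. s \<in> {0..t} \<Longrightarrow> x \<in> H0 \<Longrightarrow> norm (T0 s x) \<le> B0 * norm x"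
    using T0_ubp[OF t0] by blast
  have k1: "0 \<le> C * L" using C0 L0 by simp
  obtain c1 where c10: "c1 \<ge> 0" and gr1: "\<And>w a s. continuous_on {0..t} w \<Longrightarrow> 0 \<le> a \<Longrightarrow>
     (\<And>s. s \<in> {0..t} \<Longrightarrow> w s \<le> a + (C * L) * (LINT r:{0..s}|lborel. (s - r) powr (-\<beta>) * w r)) \<Longrightarrow>
     s \<in> {0..t} \<Longrightarrow> w s \<le> c1 * a"
    using gronwall[OF t0 k1] by blast
  obtain L' where L'0: "L' \<ge> 0" and L': "\<And>s z. s \<in> {0..t} \<Longrightarrow> norm (DG (phi \<xi> s) z) \<le> L' * norm z"
    using DGphi_bound[OF \<xi> t0] by blast
  have k2: "0 \<le> C * L'" using C0 L'0 by simp
  obtain c2 where c20: "c2 \<ge> 0" and gr2: "\<And>w a s. continuous_on {0..t} w \<Longrightarrow> 0 \<le> a \<Longrightarrow>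
     (\<And>s. s \<in> {0..t} \<Longrightarrow> w s \<le> a + (C * L') * (LINT r:{0..s}|lborel. (s - r) powr (-\<beta>) * w r)) \<Longrightarrow>
     s \<in> {0..t} \<Longrightarrow> w s \<le> c2 * a"
    using gronwall[OF t0 k2] by blast
  obtain cZ where cZ0: "cZ \<ge> 0" and cZ: "\<And>\<eta> s. \<eta> \<in> H0 \<Longrightarrow> s \<in> {0..t} \<Longrightarrow> norm (Zs \<xi> \<eta> s) \<le> cZ * norm \<eta>"
    using Zs_bound[OF \<xi> t0] by blast
  define Kc where "Kc = t powr (1 - \<beta>) / (1 - \<beta>)"
  have Kc0: "0 \<le> Kc" using beta1 by (simp add: Kc_def)
  define P where "P = phi \<xi> ` {0..t}"
  have Pc: "compact P" unfolding P_def
    by (rule compact_continuous_image[OF continuous_on_subset[OF phi_cont[OF \<xi>]] compact_Icc]) auto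
  have PH: "P \<subseteq> H0" unfolding P_def using phi_H0[OF \<xi>] by auto
  have plin: "bounded_linear (proj H0)" by (rule proj_bounded_linear[OF sub cl])
  have pH: "proj H0 x \<in> H0" for x by (rule proj_prop(1)[OF sub cl])
  show ?thesis unfolding has_derivative_within_alt
  proof (intro conjI allI impI)
    show "bounded_linear (\<lambda>\<eta>. Zs \<xi> (proj H0 \<eta>) t)"
    proof (rule bounded_linear_intro[where K=cZ])
      fix x y :: 'a
      have "proj H0 (x + y) = proj H0 x + proj H0 y" by (rule linear_add[OF bounded_linear.linear[OF plin]])
      then have "Zs \<xi> (proj H0 (x + y)) t = Zs \<xi> (1 *\<^sub>R proj H0 x + 1 *\<^sub>R proj H0 y) t" by simp
      also have "\<dots> = 1 *\<^sub>R Zs \<xi> (proj H0 x) t + 1 *\<^sub>R Zs \<xi> (proj H0 y) t"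
        by (rule Zs_lin[OF \<xi> pH pH t0])
      finally show "Zs \<xi> (proj H0 (x + y)) t = Zs \<xi> (proj H0 x) t + Zs \<xi> (proj H0 y) t" by simp
    next
      fix r :: real and x :: 'a
      have z0: "(0::'a) \<in> H0" using sub subspace_0 by blast
      have "proj H0 (r *\<^sub>R x) = r *\<^sub>R proj H0 x" by (rule linear_scale[OF bounded_linear.linear[OF plin]])
      then have "Zs \<xi> (proj H0 (r *\<^sub>R x)) t = Zs \<xi> (r *\<^sub>R proj H0 x + 0 *\<^sub>R 0) t" by simp
      also have "\<dots> = r *\<^sub>R Zs \<xi> (proj H0 x) t + 0 *\<^sub>R Zs \<xi> 0 t"
        by (rule Zs_lin[OF \<xi> pH z0 t0])
      finally show "Zs \<xi> (proj H0 (r *\<^sub>R x)) t = r *\<^sub>R Zs \<xi> (proj H0 x) t" by simp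
    next
      fix x :: 'a
      have "norm (Zs \<xi> (proj H0 x) t) \<le> cZ * norm (proj H0 x)" by (rule cZ[OF pH]) (use t0 in simp)
      also have "\<dots> \<le> cZ * norm x" using proj_norm[OF sub cl, of x] cZ0 by (rule mult_left_mono)
      finally show "norm (Zs \<xi> (proj H0 x) t) \<le> norm x * cZ" by (simp add: mult.commute)
    qed
    fix e :: real assume e: "0 < e"
    define Q where "Q = c2 * C * Kc * c1 * B0"
    have Q0: "0 \<le> Q" using c20 C0 Kc0 c10 B00 by (simp add: Q_def)
    define \<epsilon>1 where "\<epsilon>1 = e / (Q + 1)"
    have \<epsilon>1: "\<epsilon>1 > 0" using e Q0 by (simp add: \<epsilon>1_def)
    obtain \<delta>1 where \<delta>1: "\<delta>1 > 0" and lin: "\<And>p w. p \<in> P \<Longrightarrow> w \<in> H0 \<Longrightarrow> norm w < \<delta>1 \<Longrightarrow>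
        norm (G (p + w) - G p - DG p w) \<le> \<epsilon>1 * norm w"
      using unif_lin[OF Pc PH \<epsilon>1] by blast
    define d where "d = \<delta>1 / (c1 * B0 + 1)"
    have cb0: "0 \<le> c1 * B0" using c10 B00 by simp
    have d0: "d > 0" using \<delta>1 cb0 by (simp add: d_def)
    show "\<exists>d>0. \<forall>y\<in>H0. norm (y - \<xi>) < d \<longrightarrow>
       norm (cocycle T0 K G H0 Y t y - cocycle T0 K G H0 Y t \<xi> - Zs \<xi> (proj H0 (y - \<xi>)) t) \<le> e * norm (y - \<xi>)"
    proof (intro exI conjI ballI impI)
      show "0 < d" by (rule d0)
      fix \<zeta> assume \<zeta>: "\<zeta> \<in> H0" and hd: "norm (\<zeta> - \<xi>) < d"
      define h where "h = \<zeta> - \<xi>"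
      have hH: "h \<in> H0" using \<zeta> \<xi> sub by (simp add: h_def subspace_diff)
      define V where "V = Vs \<xi>"
      define V' where "V' = Vs \<zeta>"
      define Z where "Z = Zs \<xi> h"
      define W where "W s = V' s - V s" for s
      define E where "E s = W s - Z s" for s
      have Vc: "continuous_on {0..s} V" if "0 \<le> s" for s
        unfolding V_def by (rule continuous_on_subset[OF Vs_props(1)[OF \<xi>]]) auto
      have V'c: "continuous_on {0..s} V'" if "0 \<le> s" for s
        unfolding V'_def by (rule continuous_on_subset[OF Vs_props(1)[OF \<zeta>]]) auto
      have Zc: "continuous_on {0..s} Z" if "0 \<le> s" for s
        unfolding Z_def by (rule continuous_on_subset[OF Zs_props(1)[OF \<xi> hH]]) auto
      have VH: "V s \<in> H0" if "0 \<le> s" for s using Vs_props(2)[OF \<xi>] that by (auto simp: V_def)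
      have V'H: "V' s \<in> H0" if "0 \<le> s" for s using Vs_props(2)[OF \<zeta>] that by (auto simp: V'_def)
      have ZH: "Z s \<in> H0" if "0 \<le> s" for s using Zs_props(2)[OF \<xi> hH] that by (auto simp: Z_def)
      have WH: "W s \<in> H0" if "0 \<le> s" for s using VH[OF that] V'H[OF that] sub by (simp add: W_def subspace_diff)
      have EH: "E s \<in> H0" if "0 \<le> s" for s using WH[OF that] ZH[OF that] sub by (simp add: E_def subspace_diff)
      have Wc: "continuous_on {0..t} W" unfolding W_def by (intro continuous_intros V'c Vc t0)
      have Ec: "continuous_on {0..t} E" unfolding E_def by (intro continuous_intros Wc Zc t0)
      define g where "g r = G (V r + Y r)" for r
      define g' where "g' r = G (V' r + Y r)" for r
      have gc: "continuous_on {0..s} g" if "0 \<le> s" for s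
        unfolding g_def by (rule nl_Fcont[OF Vc[OF that]]) (use VH in auto)
      have g'c: "continuous_on {0..s} g'" if "0 \<le> s" for s
        unfolding g'_def by (rule nl_Fcont[OF V'c[OF that]]) (use V'H in auto)
      have phiV: "phi \<xi> s = V s + Y s" if "0 \<le> s" for s unfolding V_def by (rule phi_eq[OF \<xi> that])
      have Weq: "W s = T0 s h + conv s (\<lambda>r. g' r - g r)" if s: "s \<in> {0..t}" for s
      proof -
        have s0: "0 \<le> s" using s by simp
        have "W s = (T0 s (\<zeta> - Y 0) + conv s g') - (T0 s (\<xi> - Y 0) + conv s g)"
          unfolding W_def V_def V'_def g_def g'_def using Vs_props(3)[OF \<xi> s0] Vs_props(3)[OF \<zeta> s0] by simp
        also have "\<dots> = (T0 s (\<zeta> - Y 0) - T0 s (\<xi> - Y 0)) + (conv s g' - conv s g)" by simp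
        also have "T0 s (\<zeta> - Y 0) - T0 s (\<xi> - Y 0) = T0 s h"
          by (simp add: h_def blinfun.diff_right[symmetric])
        also have "conv s g' - conv s g = conv s (\<lambda>r. g' r - g r)"
          by (rule conv_diff[OF s0 g'c[OF s0] gc[OF s0], symmetric])
        finally show ?thesis .
      qed
      have Wbound: "norm (W s) \<le> c1 * (B0 * norm h)" if s: "s \<in> {0..t}" for s
      proof (rule gr1[OF _ _ _ s])
        show "continuous_on {0..t} (\<lambda>s. norm (W s))" by (intro continuous_intros Wc)
        show "0 \<le> B0 * norm h" using B00 by simp
        fix s assume s: "s \<in> {0..t}"
        then have s0: "0 \<le> s" by simp
        have subs: "{0..s} \<subseteq> {0..t}" using s by auto
        have "norm (conv s (\<lambda>r. g' r - g r)) \<le> C * 0 * (s powr (1 - \<beta>) / (1 - \<beta>))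
             + C * L * (LINT r:{0..s}|lborel. (s - r) powr (-\<beta>) * norm (W r))"
        proof (rule conv_est[OF s0])
          show "continuous_on {0..s} (\<lambda>r. g' r - g r)" by (intro continuous_intros g'c gc s0)
          show "continuous_on {0..s} (\<lambda>r. norm (W r))" by (intro continuous_intros continuous_on_subset[OF Wc subs])
          fix r assume r: "r \<in> {0..s}"
          then have r0: "0 \<le> r" by simp
          have a: "V' r + Y r \<in> H0" using V'H[OF r0] Y_into sub by (simp add: subspace_add)
          have b: "V r + Y r \<in> H0" using VH[OF r0] Y_into sub by (simp add: subspace_add)
          have "norm (g' r - g r) \<le> L * norm ((V' r + Y r) - (V r + Y r))"
            unfolding g_def g'_def by (rule G_lipD[OF a b])
          then show "norm (g' r - g r) \<le> 0 + L * norm (W r)" by (simp add: W_def)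
        qed
        moreover have "norm (W s) \<le> norm (T0 s h) + norm (conv s (\<lambda>r. g' r - g r))"
          using Weq[OF s] norm_triangle_ineq by metis
        moreover have "norm (T0 s h) \<le> B0 * norm h" by (rule B0[OF s hH])
        ultimately show "norm (W s) \<le> B0 * norm h + C * L * (LINT r:{0..s}|lborel. (s - r) powr (-\<beta>) * norm (W r))"
          by simp
      qed
      have Wsmall: "norm (W s) < \<delta>1" if s: "s \<in> {0..t}" for s
      proof -
        have "norm (W s) \<le> c1 * B0 * norm h" using Wbound[OF s] by (simp add: mult.assoc)
        also have "\<dots> \<le> c1 * B0 * d" using hd cb0 by (intro mult_left_mono) (auto simp: h_def)
        also have "\<dots> < \<delta>1" using \<delta>1 cb0 by (simp add: d_def field_simps)
        finally show ?thesis .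
      qed
      have Eeq: "E s = conv s (\<lambda>r. (g' r - g r) - DG (phi \<xi> r) (Z r))" if s: "s \<in> {0..t}" for s
      proof -
        have s0: "0 \<le> s" using s by simp
        have "Z s = T0 s h + conv s (\<lambda>r. DG (phi \<xi> r) (Z r))" unfolding Z_def by (rule Zs_props(3)[OF \<xi> hH s0])
        then have "E s = conv s (\<lambda>r. g' r - g r) - conv s (\<lambda>r. DG (phi \<xi> r) (Z r))"
          using Weq[OF s] by (simp add: E_def)
        also have "\<dots> = conv s (\<lambda>r. (g' r - g r) - DG (phi \<xi> r) (Z r))"
          by (rule conv_diff[OF s0 _ lin_Fcont[OF \<xi> s0 Zc[OF s0]], symmetric]) (intro continuous_intros g'c gc s0)
        finally show ?thesis .
      qed
      define b where "b = \<epsilon>1 * (c1 * (B0 * norm h))"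
      have b0: "0 \<le> b" using \<epsilon>1 c10 B00 by (simp add: b_def)
      have Ebound: "norm (E s) \<le> c2 * (C * b * Kc)" if s: "s \<in> {0..t}" for s
      proof (rule gr2[OF _ _ _ s])
        show "continuous_on {0..t} (\<lambda>s. norm (E s))" by (intro continuous_intros Ec)
        show "0 \<le> C * b * Kc" using C0 b0 Kc0 by simp
        fix s assume s: "s \<in> {0..t}"
        then have s0: "0 \<le> s" by simp
        have subs: "{0..s} \<subseteq> {0..t}" using s by auto
        have "norm (E s) \<le> C * b * (s powr (1 - \<beta>) / (1 - \<beta>))
             + C * L' * (LINT r:{0..s}|lborel. (s - r) powr (-\<beta>) * norm (E r))"
          unfolding Eeq[OF s]
        proof (rule conv_est[OF s0])
          show "continuous_on {0..s} (\<lambda>r. (g' r - g r) - DG (phi \<xi> r) (Z r))"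
            by (intro continuous_intros g'c gc s0 lin_Fcont[OF \<xi> s0 Zc[OF s0]])
          show "continuous_on {0..s} (\<lambda>r. norm (E r))" by (intro continuous_intros continuous_on_subset[OF Ec subs])
          fix r assume r: "r \<in> {0..s}"
          then have r0: "0 \<le> r" and rt: "r \<in> {0..t}" using subs by auto
          define p where "p = phi \<xi> r"
          have pP: "p \<in> P" unfolding p_def P_def using rt by blast
          have pV: "p = V r + Y r" unfolding p_def by (rule phiV[OF r0])
          have V'p: "V' r + Y r = p + W r" using pV by (simp add: W_def)
          have split: "(g' r - g r) - DG p (Z r) = (G (p + W r) - G p - DG p (W r)) + DG p (E r)"
            unfolding g_def g'_def V'p pV[symmetric] E_def by (simp add: blinfun.diff_right)
          have n1: "norm (G (p + W r) - G p - DG p (W r)) \<le> \<epsilon>1 * norm (W r)"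
            by (rule lin[OF pP WH[OF r0] Wsmall[OF rt]])
          also have "\<dots> \<le> b" unfolding b_def using Wbound[OF rt] \<epsilon>1 by (intro mult_left_mono) auto
          finally have n1': "norm (G (p + W r) - G p - DG p (W r)) \<le> b" .
          have n2: "norm (DG p (E r)) \<le> L' * norm (E r)" unfolding p_def by (rule L'[OF rt])
          have "norm ((g' r - g r) - DG p (Z r)) \<le> norm (G (p + W r) - G p - DG p (W r)) + norm (DG p (E r))"
            unfolding split by (rule norm_triangle_ineq)
          then show "norm ((g' r - g r) - DG (phi \<xi> r) (Z r)) \<le> b + L' * norm (E r)"
            using n1' n2 by (simp add: p_def)
        qed
        also have "C * b * (s powr (1 - \<beta>) / (1 - \<beta>)) \<le> C * b * Kc"
        proof (rule mult_left_mono)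
          show "s powr (1 - \<beta>) / (1 - \<beta>) \<le> Kc" unfolding Kc_def
            using s beta1 by (intro divide_right_mono powr_mono2) auto
          show "0 \<le> C * b" using C0 b0 by simp
        qed
        finally show "norm (E s) \<le> C * b * Kc + C * L' * (LINT r:{0..s}|lborel. (s - r) powr (-\<beta>) * norm (E r))"
          by simp
      qed
      have "cocycle T0 K G H0 Y t \<zeta> - cocycle T0 K G H0 Y t \<xi> - Zs \<xi> (proj H0 (\<zeta> - \<xi>)) t = E t"
      proof -
        have "cocycle T0 K G H0 Y t \<zeta> = V' t + Y t" using phi_eq[OF \<zeta> t0] by (simp add: phi_def V'_def)
        moreover have "cocycle T0 K G H0 Y t \<xi> = V t + Y t" using phi_eq[OF \<xi> t0] by (simp add: phi_def V_def)
        moreover have "proj H0 (\<zeta> - \<xi>) = h" using proj_id[OF sub cl hH] by (simp add: h_def)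
        ultimately show ?thesis by (simp add: E_def W_def Z_def)
      qed
      moreover have "norm (E t) \<le> e * norm (\<zeta> - \<xi>)"
      proof -
        have "norm (E t) \<le> c2 * (C * b * Kc)" by (rule Ebound) (use t0 in simp)
        also have "\<dots> = Q * \<epsilon>1 * norm h" by (simp add: Q_def b_def mult_ac)
        also have "\<dots> = (Q / (Q + 1)) * e * norm h" using Q0 by (simp add: \<epsilon>1_def field_simps)
        also have "\<dots> \<le> 1 * e * norm h" using Q0 e by (intro mult_right_mono) (auto simp: field_simps)
        finally show ?thesis by (simp add: h_def)
      qed
      ultimately show "norm (cocycle T0 K G H0 Y t \<zeta> - cocycle T0 K G H0 Y t \<xi> - Zs \<xi> (proj H0 (\<zeta> - \<xi>)) t)
          \<le> e * norm (\<zeta> - \<xi>)" by simp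
    qed
  qed
qed

lemma deriv_eq:
  assumes \<xi>: "\<xi> \<in> H0" and \<eta>: "\<eta> \<in> H0" and t0: "0 \<le> t"
  shows "Zs \<xi> (proj H0 \<eta>) t = T0 t \<eta> + conv t (\<lambda>s. DG (cocycle T0 K G H0 Y s \<xi>) (Zs \<xi> (proj H0 \<eta>) s))"
  using Zs_props(3)[OF \<xi> \<eta> t0] proj_id[OF sub cl \<eta>] by (simp add: phi_def)

end

theorem proposition4p1:
  fixes H0 :: "'a::{real_inner,banach,second_countable_topology} set"
    and T0 :: "real \<Rightarrow> 'a \<Rightarrow>\<^sub>L 'a"
    and K :: "real \<Rightarrow> 'a \<Rightarrow>\<^sub>L 'a"
    and Pw :: "real \<Rightarrow> real \<Rightarrow> 'a \<Rightarrow>\<^sub>L 'a"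
    and Rn :: "real \<Rightarrow> 'a \<Rightarrow>\<^sub>L 'a"
    and M :: "real \<Rightarrow> real"
    and \<omega>A pstar :: real
    and Y :: "'w \<Rightarrow> real \<Rightarrow> 'a"
    and G :: "'a \<Rightarrow> 'a"
    and DG :: "'a \<Rightarrow> 'a \<Rightarrow>\<^sub>L 'a"
  assumes H0_subspace: "subspace H0" and H0_closed: "closed H0" and H0_proper: "H0 \<noteq> UNIV"
    and T0_into: "\<And>t x. t \<ge> 0 \<Longrightarrow> x \<in> H0 \<Longrightarrow> T0 t x \<in> H0"
    and T0_zero: "\<And>x. x \<in> H0 \<Longrightarrow> T0 0 x = x"
    and T0_semigroup: "\<And>t s x. t \<ge> 0 \<Longrightarrow> s \<ge> 0 \<Longrightarrow> x \<in> H0 \<Longrightarrow> T0 (t + s) x = T0 t (T0 s x)"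
    and T0_strong_cont: "\<And>x. x \<in> H0 \<Longrightarrow> continuous_on {0..} (\<lambda>t. T0 t x)"
    and pstar: "pstar \<ge> 1"
    and \<omega>A_neg: "\<omega>A < 0"
    and Rn_into: "\<And>\<beta> x. \<beta> \<in> {1 - 1/pstar<..<1} \<Longrightarrow> Rn \<beta> x \<in> H0"
    and Pw_into: "\<And>\<beta> t x. \<beta> \<in> {1 - 1/pstar<..<1} \<Longrightarrow> t > 0 \<Longrightarrow> x \<in> H0 \<Longrightarrow> Pw \<beta> t x \<in> H0"
    and Pw_bound: "\<And>\<beta> t x. \<beta> \<in> {1 - 1/pstar<..<1} \<Longrightarrow> t > 0 \<Longrightarrow> x \<in> H0 \<Longrightarrow>
        norm (Pw \<beta> t x) \<le> M \<beta> * t powr (-\<beta>) * exp (\<omega>A * t) * norm x"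
    and Pw_strong_cont: "\<And>\<beta> x. \<beta> \<in> {1 - 1/pstar<..<1} \<Longrightarrow> x \<in> H0 \<Longrightarrow>
        continuous_on {0<..} (\<lambda>t. Pw \<beta> t x)"
    and K_eq: "\<And>\<beta> t x. \<beta> \<in> {1 - 1/pstar<..<1} \<Longrightarrow> t > 0 \<Longrightarrow> K t x = Pw \<beta> t (Rn \<beta> x)"
    and Y_cont: "\<And>w. continuous_on UNIV (Y w)"
    and Y_into: "\<And>w t. Y w t \<in> H0"
    and G_lipschitz: "\<exists>L. L-lipschitz_on H0 G"
    and G_deriv: "\<And>x. x \<in> H0 \<Longrightarrow> (G has_derivative blinfun_apply (DG x)) (at x within H0)"
    and DG_cont: "continuous_on H0 DG"
  shows "\<forall>w. \<forall>\<xi>\<in>H0. \<exists>D :: real \<Rightarrow> 'a \<Rightarrow> 'a.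
           (\<forall>t>0. ((\<lambda>\<zeta>. cocycle T0 K G H0 (Y w) t \<zeta>) has_derivative D t) (at \<xi> within H0)) \<and>
           (\<forall>\<beta>\<in>{1 - 1/pstar<..<1}. \<forall>t>0. \<forall>\<eta>\<in>H0.
              D t \<eta> = T0 t \<eta> +
                (LINT s:{0..t}|lborel.
                   Pw \<beta> (t - s) (Rn \<beta> (DG (cocycle T0 K G H0 (Y w) s \<xi>) (D s \<eta>)))))"
proof (intro allI ballI)
  fix w \<xi> assume \<xi>: "\<xi> \<in> H0"
  define \<beta>0 where "\<beta>0 = 1 - 1 / (2 * pstar)"
  have b0in: "\<beta>0 \<in> {1 - 1/pstar<..<1}" using pstar by (auto simp: \<beta>0_def field_simps)
  have b00: "0 \<le> \<beta>0" using pstar by (simp add: \<beta>0_def field_simps)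
  have b01: "\<beta>0 < 1" using b0in by simp
  define CC where "CC = \<bar>M \<beta>0\<bar> * norm (Rn \<beta>0)"
  obtain L where Lip: "L-lipschitz_on H0 G" using G_lipschitz by blast
  have Kb: "norm (K t x) \<le> CC * t powr (-\<beta>0) * norm x" if t: "t > 0" for t x
  proof -
    have R: "Rn \<beta>0 x \<in> H0" by (rule Rn_into[OF b0in])
    have "norm (K t x) = norm (Pw \<beta>0 t (Rn \<beta>0 x))" using K_eq[OF b0in t] by simp
    also have "\<dots> \<le> M \<beta>0 * t powr (-\<beta>0) * exp (\<omega>A * t) * norm (Rn \<beta>0 x)" by (rule Pw_bound[OF b0in t R])
    also have "\<dots> = M \<beta>0 * (t powr (-\<beta>0) * exp (\<omega>A * t) * norm (Rn \<beta>0 x))" by (simp add: mult_ac)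
    also have "\<dots> \<le> \<bar>M \<beta>0\<bar> * (t powr (-\<beta>0) * exp (\<omega>A * t) * norm (Rn \<beta>0 x))"
      by (rule mult_right_mono) auto
    also have "\<dots> \<le> \<bar>M \<beta>0\<bar> * (t powr (-\<beta>0) * 1 * (norm (Rn \<beta>0) * norm x))"
    proof (intro mult_left_mono mult_mono norm_blinfun)
      show "exp (\<omega>A * t) \<le> 1" using \<omega>A_neg t by (simp add: mult_neg_pos less_imp_le)
    qed auto
    also have "\<dots> = CC * t powr (-\<beta>0) * norm x" by (simp add: CC_def mult_ac)
    finally show ?thesis .
  qed
  interpret m: msetup H0 K CC \<beta>0 T0 G DG L "Y w"
  proof (unfold_locales)
    show "subspace H0" by (rule H0_subspace)
    show "closed H0" by (rule H0_closed)
    show "0 \<le> \<beta>0" by (rule b00)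
    show "\<beta>0 < 1" by (rule b01)
    show "0 \<le> CC" by (simp add: CC_def)
    show "\<And>t x. 0 < t \<Longrightarrow> K t x \<in> H0" using K_eq[OF b0in] Pw_into[OF b0in] Rn_into[OF b0in] by simp
    show "\<And>t x. 0 < t \<Longrightarrow> norm (K t x) \<le> CC * t powr - \<beta>0 * norm x" by (rule Kb)
    show "\<And>x. continuous_on {0<..} (\<lambda>t. K t x)"
    proof -
      fix x
      have "continuous_on {0<..} (\<lambda>t. Pw \<beta>0 t (Rn \<beta>0 x))" by (rule Pw_strong_cont[OF b0in Rn_into[OF b0in]])
      then show "continuous_on {0<..} (\<lambda>t. K t x)"
        by (rule continuous_on_cong[THEN iffD1, rotated 2]) (use K_eq[OF b0in] in auto)
    qed
    show "\<And>t x. 0 \<le> t \<Longrightarrow> x \<in> H0 \<Longrightarrow> T0 t x \<in> H0" by (rule T0_into)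
    show "\<And>x. x \<in> H0 \<Longrightarrow> continuous_on {0..} (\<lambda>t. T0 t x)" by (rule T0_strong_cont)
    show "L-lipschitz_on H0 G" by (rule Lip)
    show "\<And>x. x \<in> H0 \<Longrightarrow> (G has_derivative blinfun_apply (DG x)) (at x within H0)" by (rule G_deriv)
    show "continuous_on H0 DG" by (rule DG_cont)
    show "continuous_on UNIV (Y w)" by (rule Y_cont)
    show "\<And>t. Y w t \<in> H0" by (rule Y_into)
  qed
  show "\<exists>D :: real \<Rightarrow> 'a \<Rightarrow> 'a.
           (\<forall>t>0. ((\<lambda>\<zeta>. cocycle T0 K G H0 (Y w) t \<zeta>) has_derivative D t) (at \<xi> within H0)) \<and>
           (\<forall>\<beta>\<in>{1 - 1/pstar<..<1}. \<forall>t>0. \<forall>\<eta>\<in>H0.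
              D t \<eta> = T0 t \<eta> +
                (LINT s:{0..t}|lborel.
                   Pw \<beta> (t - s) (Rn \<beta> (DG (cocycle T0 K G H0 (Y w) s \<xi>) (D s \<eta>)))))"
  proof (intro exI[of _ "\<lambda>t \<eta>. m.Zs \<xi> (proj H0 \<eta>) t"] conjI allI impI ballI)
    fix t :: real assume "t > 0"
    then show "((\<lambda>\<zeta>. cocycle T0 K G H0 (Y w) t \<zeta>) has_derivative (\<lambda>\<eta>. m.Zs \<xi> (proj H0 \<eta>) t)) (at \<xi> within H0)"
      by (rule m.deriv_main[OF \<xi>])
  next
    fix \<beta> t :: real and \<eta> assume b: "\<beta> \<in> {1 - 1/pstar<..<1}" and t: "t > 0" and \<eta>: "\<eta> \<in> H0"
    let ?u = "\<lambda>s. DG (cocycle T0 K G H0 (Y w) s \<xi>) (m.Zs \<xi> (proj H0 \<eta>) s)"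
    have "m.Zs \<xi> (proj H0 \<eta>) t = T0 t \<eta> + m.conv t ?u"
      by (rule m.deriv_eq[OF \<xi> \<eta>]) (use t in simp)
    also have "m.conv t ?u = (LINT s:{0..t}|lborel. Pw \<beta> (t - s) (Rn \<beta> (?u s)))"
      unfolding m.conv_def set_lebesgue_integral_def
    proof (rule integral_discrete_difference[where X="{t}"])
      fix s assume "s \<in> space lborel" "s \<notin> {t}"
      then have st: "s \<noteq> t" by simp
      show "indicator {0..t} s *\<^sub>R K (t - s) (?u s) = indicator {0..t} s *\<^sub>R Pw \<beta> (t - s) (Rn \<beta> (?u s))"
      proof (cases "s \<in> {0..t}")
        case True
        then have "t - s > 0" using st by auto
        then show ?thesis using K_eq[OF b] by simp
      qed simp
    qed auto
    finally show "m.Zs \<xi> (proj H0 \<eta>) t = T0 t \<eta> +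
        (LINT s:{0..t}|lborel. Pw \<beta> (t - s) (Rn \<beta> (DG (cocycle T0 K G H0 (Y w) s \<xi>) (m.Zs \<xi> (proj H0 \<eta>) s))))" .
  qed
qed


end
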